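(* Let $R$ be a finite local Frobenius ring, not a field and of odd characteristic, with a fixed primitive additive character $\psi$. Let $\tau$ be a non-primitive multiplicative character and $\chi$ a non-primitive multiplicative character of $R$. Then $$\sum_{a\in R^\times}\chi(a)\,|K_\tau(a)|^2=\begin{cases}|R^\times|\,|R| & \text{if }\chi=\mathbb{1}\text{ or }\chi=\sigma,\\ 0&\text{otherwise.}\end{cases}$$
   Context: All rings are finite and commutative with identity; $R^\times$ is the unit group; $M$ is the maximal ideal. An additive character $(R,+)\to\mathbb{C}^*$ is primitive if the only ideal on which it is identically $1$ is $(0)$; $R$ is Frobenius if such a character exists. A multiplicative character is a homomorphism $R^\times\to\mathbb{C}^*$; $\mathbb{1}$ is the trivial one; its conductor is $R$ if it is trivial, and otherwise the largest ideal $I\subseteq M$ such that it is identically $1$ on $1+I$; it is primitive if its conductor is $(0)$. $K_\tau(a)=\sum_{u\in R^\times}\tau(u)\psi(u+au^{-1})$. Odd characteristic means $R/M$ has odd characteristic; the quadratic character $\sigma$ sends $u\in R^\times$ to the quadratic character of its residue class in $R/M$. *)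

theory Defs
  imports Complex_Main
begin

(* Finite commutative rings with identity are modelled by a type 'a :: {comm_ring_1, finite}. *)

definition ring_ideal :: "'a::comm_ring_1 set \<Rightarrow> bool" where
  "ring_ideal I \<longleftrightarrow> 0 \<in> I \<and> (\<forall>x\<in>I. \<forall>y\<in>I. x + y \<in> I) \<and> (\<forall>r x. x \<in> I \<longrightarrow> r * x \<in> I)"

definition maximal_ideal :: "'a::comm_ring_1 set \<Rightarrow> bool" where
  "maximal_ideal M \<longleftrightarrow> ring_ideal M \<and> M \<noteq> UNIV \<and>
     (\<forall>J. ring_ideal J \<and> M \<subseteq> J \<longrightarrow> J = M \<or> J = UNIV)"

definition local_ring :: "'a::comm_ring_1 itself \<Rightarrow> bool" where
  "local_ring _ \<longleftrightarrow> (\<exists>!M::'a set. maximal_ideal M)"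

definition max_ideal :: "'a::comm_ring_1 set" where
  "max_ideal = (THE M. maximal_ideal M)"

definition units :: "'a::comm_ring_1 set" where
  "units = {u. u dvd 1}"

definition unit_inv :: "'a::comm_ring_1 \<Rightarrow> 'a" where
  "unit_inv u = (THE v. u * v = 1)"

definition is_field_ring :: "'a::comm_ring_1 itself \<Rightarrow> bool" where
  "is_field_ring _ \<longleftrightarrow> (0::'a) \<noteq> 1 \<and> (\<forall>x::'a. x \<noteq> 0 \<longrightarrow> x dvd 1)"

definition residue_char :: "'a::comm_ring_1 itself \<Rightarrow> nat" where
  "residue_char _ = (LEAST n. n > 0 \<and> (of_nat n :: 'a) \<in> max_ideal)"

definition add_char :: "('a::comm_ring_1 \<Rightarrow> complex) \<Rightarrow> bool" where
  "add_char \<psi> \<longleftrightarrow> (\<forall>x y. \<psi> (x + y) = \<psi> x * \<psi> y) \<and> (\<forall>x. \<psi> x \<noteq> 0)"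

definition primitive_add_char :: "('a::comm_ring_1 \<Rightarrow> complex) \<Rightarrow> bool" where
  "primitive_add_char \<psi> \<longleftrightarrow> add_char \<psi> \<and>
     (\<forall>I. ring_ideal I \<and> (\<forall>x\<in>I. \<psi> x = 1) \<longrightarrow> I = {0})"

definition frobenius :: "'a::comm_ring_1 itself \<Rightarrow> bool" where
  "frobenius _ \<longleftrightarrow> (\<exists>\<psi>::'a \<Rightarrow> complex. primitive_add_char \<psi>)"

(* multiplicative character R^x \<rightarrow> C^*; only the values on units matter *)
definition mult_char :: "('a::comm_ring_1 \<Rightarrow> complex) \<Rightarrow> bool" where
  "mult_char \<chi> \<longleftrightarrow> (\<forall>u\<in>units. \<forall>v\<in>units. \<chi> (u * v) = \<chi> u * \<chi> v) \<and> (\<forall>u\<in>units. \<chi> u \<noteq> 0)"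

definition trivial_char :: "('a::comm_ring_1 \<Rightarrow> complex) \<Rightarrow> bool" where
  "trivial_char \<chi> \<longleftrightarrow> (\<forall>u\<in>units. \<chi> u = 1)"

definition conductor :: "('a::comm_ring_1 \<Rightarrow> complex) \<Rightarrow> 'a set" where
  "conductor \<chi> = (if trivial_char \<chi> then UNIV else
     (THE I. (ring_ideal I \<and> I \<subseteq> max_ideal \<and> (\<forall>x\<in>I. \<chi> (1 + x) = 1)) \<and>
        (\<forall>J. ring_ideal J \<and> J \<subseteq> max_ideal \<and> (\<forall>x\<in>J. \<chi> (1 + x) = 1) \<longrightarrow> J \<subseteq> I)))"

definition primitive_mult_char :: "('a::comm_ring_1 \<Rightarrow> complex) \<Rightarrow> bool" where
  "primitive_mult_char \<chi> \<longleftrightarrow> conductor \<chi> = {0}"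

definition quad_char :: "'a::comm_ring_1 \<Rightarrow> complex" where
  "quad_char u = (if \<exists>v. u - v * v \<in> max_ideal then 1 else -1)"

definition kloosterman :: "('a::comm_ring_1 \<Rightarrow> complex) \<Rightarrow> ('a \<Rightarrow> complex) \<Rightarrow> 'a \<Rightarrow> complex" where
  "kloosterman \<psi> \<tau> a = (\<Sum>u\<in>units. \<tau> u * \<psi> (u + a * unit_inv u))"

end

theory Submission
  imports Defs
begin


lemma unit_inv_prop:
  fixes u :: "'a::comm_ring_1"
  assumes "u \<in> units" shows "u * unit_inv u = 1"
proof -
  from assms obtain v where v: "1 = u * v" by (auto simp: units_def elim: dvdE)
  have "\<exists>!v. u * v = 1"
  proof
    show "u * v = 1" using v by simp
    fix w assume "u * w = 1"
    then have "v * (u * w) = v" by simp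
    then show "w = v" using v by (metis mult.assoc mult.commute mult_1_left)
  qed
  then show ?thesis unfolding unit_inv_def by (rule theI')
qed

lemma unit_inv_eq:
  fixes u :: "'a::comm_ring_1"
  assumes "u * v = 1" shows "unit_inv u = v"
proof -
  have u: "u \<in> units" using assms by (auto simp: units_def intro: dvdI[of _ _ v] )
  have "u * unit_inv u = 1" by (rule unit_inv_prop[OF u])
  then have "v * (u * unit_inv u) = v" by simp
  then show ?thesis using assms by (metis mult.assoc mult.commute mult_1_left)
qed

lemma units_iff: "(u::'a::comm_ring_1) \<in> units \<longleftrightarrow> (\<exists>v. u * v = 1)"
  by (auto simp: units_def dvd_def)

lemma unit_inv_unit: "(u::'a::comm_ring_1) \<in> units \<Longrightarrow> unit_inv u \<in> units"
  using unit_inv_prop units_iff by (metis mult.commute)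

lemma units_mult: "(u::'a::comm_ring_1) \<in> units \<Longrightarrow> v \<in> units \<Longrightarrow> u * v \<in> units"
  using mult_dvd_mono[of u 1 v 1] by (simp add: units_def)

lemma units_one[simp]: "(1::'a::comm_ring_1) \<in> units" by (simp add: units_def)
lemma units_minus: "(u::'a::comm_ring_1) \<in> units \<Longrightarrow> - u \<in> units"
  by (simp add: units_def)

lemma unit_inv_mult: "(u::'a::comm_ring_1) \<in> units \<Longrightarrow> v \<in> units \<Longrightarrow>
   unit_inv (u * v) = unit_inv u * unit_inv v"
  apply (rule unit_inv_eq)
  using unit_inv_prop[of u] unit_inv_prop[of v] by (simp add: algebra_simps)

lemma unit_inv_inv: "(u::'a::comm_ring_1) \<in> units \<Longrightarrow> unit_inv (unit_inv u) = u"
  by (rule unit_inv_eq) (simp add: unit_inv_prop mult.commute)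

lemma unit_inv_minus: "(u::'a::comm_ring_1) \<in> units \<Longrightarrow> unit_inv (- u) = - unit_inv u"
  by (rule unit_inv_eq) (simp add: unit_inv_prop)

lemma unit_inv_one[simp]: "unit_inv (1::'a::comm_ring_1) = 1"
  by (rule unit_inv_eq) simp

lemma unit_cancel: "(u::'a::comm_ring_1) \<in> units \<Longrightarrow> u * x = u * y \<Longrightarrow> x = y"
  by (metis mult.assoc mult.commute mult_1_left unit_inv_prop)

lemma unit_zero: "(u::'a::comm_ring_1) \<in> units \<Longrightarrow> u * x = 0 \<Longrightarrow> x = 0"
  using unit_cancel[of u x 0] by simp

lemma bij_mult_units: "(v::'a::comm_ring_1) \<in> units \<Longrightarrow> bij_betw (\<lambda>t. v * t) units units"
  apply (rule bij_betw_byWitness[where f'="\<lambda>t. unit_inv v * t"])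
  using units_mult unit_inv_unit unit_inv_prop[of v]
  by (auto simp: mult.assoc[symmetric]) (simp_all add: mult.commute)

lemma ideal_mult: "ring_ideal I \<Longrightarrow> x \<in> I \<Longrightarrow> r * x \<in> I"
  by (simp add: ring_ideal_def)
lemma ideal_add: "ring_ideal I \<Longrightarrow> x \<in> I \<Longrightarrow> y \<in> I \<Longrightarrow> x + y \<in> I"
  by (simp add: ring_ideal_def)
lemma ideal_zero: "ring_ideal I \<Longrightarrow> 0 \<in> I"
  by (simp add: ring_ideal_def)
lemma ideal_uminus: "ring_ideal I \<Longrightarrow> x \<in> I \<Longrightarrow> - x \<in> I"
  using ideal_mult[of I x "-1"] by simp
lemma ideal_diff: "ring_ideal I \<Longrightarrow> x \<in> I \<Longrightarrow> y \<in> I \<Longrightarrow> x - y \<in> I"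
  using ideal_add ideal_uminus by (metis diff_conv_add_uminus)
lemma ideal_mult_right: "ring_ideal I \<Longrightarrow> x \<in> I \<Longrightarrow> x * r \<in> I"
  using ideal_mult by (metis mult.commute)



locale lr =
  fixes \<psi> :: "'a::{comm_ring_1,finite} \<Rightarrow> complex"
  assumes loc: "local_ring TYPE('a)"
    and nf: "\<not> is_field_ring TYPE('a)"
    and prim: "primitive_add_char \<psi>"
begin

lemma range_ideal: "ring_ideal (range (\<lambda>r. r * x))"
  unfolding ring_ideal_def
proof (intro conjI ballI allI impI)
  show "0 \<in> range (\<lambda>r. r * x)" by (rule range_eqI[where x=0]) simp
  fix a b assume "a \<in> range (\<lambda>r. r * x)" "b \<in> range (\<lambda>r. r * x)"
  then obtain r1 r2 where "a = r1 * x" "b = r2 * x" by blast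
  then show "a + b \<in> range (\<lambda>r. r * x)" by (intro range_eqI[where x="r1 + r2"]) (simp add: distrib_right)
next
  fix r a assume "a \<in> range (\<lambda>r. r * x)"
  then obtain r1 where "a = r1 * x" by blast
  then show "r * a \<in> range (\<lambda>r. r * x)" by (intro range_eqI[where x="r * r1"]) (simp add: mult.assoc)
qed

abbreviation M where "M \<equiv> (max_ideal :: 'a set)"
abbreviation U where "U \<equiv> (units :: 'a set)"
definition A :: "'a set" where "A = {s. \<forall>m\<in>M. m * s = 0}"

lemma maxM: "maximal_ideal M"
  using loc unfolding local_ring_def max_ideal_def by (rule theI')

lemma max_unique: "maximal_ideal J \<Longrightarrow> J = M"
  using loc unfolding local_ring_def max_ideal_def by (metis the1_equality)

lemma M_ideal: "ring_ideal M" using maxM by (simp add: maximal_ideal_def)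

lemma one_notin_M: "(1::'a) \<notin> M"
proof
  assume "(1::'a) \<in> M"
  then have "\<forall>r::'a. r \<in> M" using ideal_mult[OF M_ideal, of 1] by (metis mult_1_right)
  then show False using maxM by (auto simp: maximal_ideal_def)
qed

lemma unit_notin_M: "u \<in> U \<Longrightarrow> u \<notin> M"
proof
  assume "u \<in> U" "u \<in> M"
  then have "u * unit_inv u \<in> M" using ideal_mult_right[OF M_ideal] by blast
  then show False using unit_inv_prop[OF \<open>u \<in> U\<close>] one_notin_M by simp
qed

lemma nonunit_in_M:
  assumes "x \<notin> U" shows "x \<in> M"
proof -
  let ?S = "{J::'a set. ring_ideal J \<and> (\<forall>r. r * x \<in> J) \<and> J \<noteq> UNIV}"
  have J0: "range (\<lambda>r. r * x) \<in> ?S"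
  proof -
    have "ring_ideal (range (\<lambda>r. r * x))" by (rule range_ideal)
    moreover have "1 \<notin> range (\<lambda>r. r * x)"
      using assms units_iff by (metis (mono_tags, lifting) imageE mult.commute)
    ultimately show ?thesis by auto
  qed
  have "finite ?S" by simp
  then obtain J where J: "J \<in> ?S" and Jmax: "\<forall>b\<in>?S. J \<le> b \<longrightarrow> J = b"
    using finite_has_maximal[of ?S] J0 by blast
  have "maximal_ideal J"
    unfolding maximal_ideal_def
  proof (intro conjI allI impI)
    show "ring_ideal J" "J \<noteq> UNIV" using J by auto
    fix J' assume "ring_ideal J' \<and> J \<subseteq> J'"
    then show "J' = J \<or> J' = UNIV" using Jmax J by blast
  qed
  then have "J = M" by (rule max_unique)
  moreover have "1 * x \<in> J" using J by blast
  ultimately show ?thesis by simp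
qed

lemma inM_iff: "x \<in> M \<longleftrightarrow> x \<notin> U"
  using nonunit_in_M unit_notin_M by blast

lemma one_plus_M: assumes "m \<in> M" shows "1 + m \<in> U"
proof (rule ccontr)
  assume "1 + m \<notin> U"
  then have "1 + m \<in> M" using inM_iff by blast
  then have "(1 + m) - m \<in> M" using ideal_diff[OF M_ideal] assms by blast
  then show False using one_notin_M by simp
qed

lemma unit_plus_M: assumes "u \<in> U" "m \<in> M" shows "u + m \<in> U"
proof -
  have "u + m = u * (1 + unit_inv u * m)"
    using unit_inv_prop[OF assms(1)] by (simp add: algebra_simps mult.assoc[symmetric])
  moreover have "1 + unit_inv u * m \<in> U" using one_plus_M ideal_mult[OF M_ideal assms(2)] by blast
  ultimately show ?thesis using units_mult assms(1) by metis
qed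

lemma M_prime: "x * y \<in> M \<Longrightarrow> x \<in> M \<or> y \<in> M"
  using units_mult inM_iff by blast

lemma zero_ne_one: "(0::'a) \<noteq> 1"
  using ideal_zero[OF M_ideal] one_notin_M by metis

lemma M_nonzero: "\<exists>x\<in>M. x \<noteq> 0"
proof (rule ccontr)
  assume "\<not> ?thesis"
  then have "\<forall>x::'a. x \<noteq> 0 \<longrightarrow> x dvd 1" using inM_iff units_def by auto
  then show False using nf zero_ne_one by (simp add: is_field_ring_def)
qed

lemma A_ideal: "ring_ideal A"
  unfolding ring_ideal_def A_def
proof (intro conjI ballI allI impI)
  fix x y assume "x \<in> {s. \<forall>m\<in>M. m * s = 0}" "y \<in> {s. \<forall>m\<in>M. m * s = 0}"
  then show "x + y \<in> {s. \<forall>m\<in>M. m * s = 0}" by (simp add: distrib_left)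
next
  fix r x assume "x \<in> {s. \<forall>m\<in>M. m * s = 0}"
  then have h: "\<forall>m\<in>M. m * x = 0" by simp
  show "r * x \<in> {s. \<forall>m\<in>M. m * s = 0}"
  proof (simp, intro ballI)
    fix m assume m: "m \<in> M"
    have "m * (r * x) = r * (m * x)" by (rule mult.left_commute)
    also have "\<dots> = 0" using h m by simp
    finally show "m * (r * x) = 0" .
  qed
qed simp

lemma A_sub_M: "A \<subseteq> M"
proof
  fix s assume s: "s \<in> A"
  show "s \<in> M"
  proof (rule ccontr)
    assume "s \<notin> M"
    then have "s \<in> U" using inM_iff by blast
    obtain x where "x \<in> M" "x \<noteq> 0" using M_nonzero by blast
    with s have "s * x = 0" by (auto simp: A_def mult.commute)
    then show False using unit_zero[OF \<open>s \<in> U\<close>] \<open>x \<noteq> 0\<close> by blast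
  qed
qed

lemma M_mult_A: "m \<in> M \<Longrightarrow> s \<in> A \<Longrightarrow> m * s = 0"
  by (simp add: A_def)

lemma exists_socle_elem:
  assumes I: "ring_ideal I" and P: "ring_ideal P" and nsub: "\<not> P \<subseteq> I"
  shows "\<exists>x\<in>P. x \<notin> I \<and> (\<forall>n\<in>M. n * x \<in> I)"
proof -
  obtain x0 where "x0 \<in> P" "x0 \<notin> I" using nsub by blast
  then obtain x where x: "x \<in> P \<and> x \<notin> I"
    and xmin: "\<forall>y. y \<in> P \<and> y \<notin> I \<longrightarrow> card (range (\<lambda>r. r * x)) \<le> card (range (\<lambda>r. r * y))"
    using ex_has_least_nat[of "\<lambda>y. y \<in> P \<and> y \<notin> I" x0 "\<lambda>y. card (range (\<lambda>r. r * y))"] by blast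
  have "\<forall>n\<in>M. n * x \<in> I"
  proof (rule ccontr)
    assume "\<not> ?thesis"
    then obtain n where n: "n \<in> M" "n * x \<notin> I" by blast
    have nxP: "n * x \<in> P" using ideal_mult[OF P] x by blast
    have sub: "range (\<lambda>r. r * (n * x)) \<subseteq> range (\<lambda>r. r * x)"
      by (auto simp: mult.assoc[symmetric])
    have "x \<notin> range (\<lambda>r. r * (n * x))"
    proof
      assume "x \<in> range (\<lambda>r. r * (n * x))"
      then obtain r where r: "x = r * (n * x)" by blast
      have "(1 + - (r * n)) * x = 0" using r by (simp add: algebra_simps)
      moreover have "1 + - (r * n) \<in> U"
        using one_plus_M ideal_uminus[OF M_ideal] ideal_mult[OF M_ideal n(1)] by blast
      ultimately have "x = 0" using unit_zero by blast
      then show False using x ideal_zero[OF I] by simp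
    qed
    moreover have "x \<in> range (\<lambda>r. r * x)" by (metis mult_1_left rangeI)
    ultimately have "range (\<lambda>r. r * (n * x)) \<subset> range (\<lambda>r. r * x)" using sub by blast
    then have "card (range (\<lambda>r. r * (n * x))) < card (range (\<lambda>r. r * x))"
      by (simp add: psubset_card_mono)
    with xmin nxP n(2) show False by fastforce
  qed
  with x show ?thesis by blast
qed

lemma univ_ideal: "ring_ideal (UNIV::'a set)" by (simp add: ring_ideal_def)
lemma zero_ideal: "ring_ideal ({0}::'a set)" by (simp add: ring_ideal_def)

lemma A_nonzero: "\<exists>z\<in>A. z \<noteq> 0"
proof -
  have "\<not> UNIV \<subseteq> {0::'a}"
  proof
    assume "UNIV \<subseteq> {0::'a}" then have "(1::'a) = 0" by blast
    then show False using zero_ne_one by simp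
  qed
  then show ?thesis using exists_socle_elem[OF zero_ideal univ_ideal] by (auto simp: A_def)
qed

lemma psi_add: "\<psi> (x + y) = \<psi> x * \<psi> y"
  using prim by (simp add: primitive_add_char_def add_char_def)
lemma psi_nz: "\<psi> x \<noteq> 0"
  using prim by (simp add: primitive_add_char_def add_char_def)
lemma psi_0: "\<psi> 0 = 1"
  using psi_add[of 0 0] psi_nz[of 0] by simp
lemma psi_neg: "\<psi> (- x) * \<psi> x = 1"
  using psi_add[of "-x" x] psi_0 by simp
lemma psi_diff: "\<psi> (x - y) = \<psi> x * \<psi> (- y)"
  using psi_add[of x "-y"] by simp

lemma psi_nontriv:
  assumes "ring_ideal J" "J \<noteq> {0}" shows "\<exists>s\<in>J. \<psi> s \<noteq> 1"
  using prim assms unfolding primitive_add_char_def by blast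

lemma sum_ideal_char:
  assumes J: "ring_ideal J" and s0: "s0 \<in> J" and ne: "\<psi> (c * s0) \<noteq> 1"
  shows "(\<Sum>s\<in>J. \<psi> (c * s)) = 0"
proof -
  have bij: "bij_betw (\<lambda>s. s + s0) J J"
    by (rule bij_betw_byWitness[where f'="\<lambda>s. s - s0"])
       (auto intro: ideal_add[OF J] ideal_diff[OF J] s0)
  have "(\<Sum>s\<in>J. \<psi> (c * s)) = (\<Sum>s\<in>J. \<psi> (c * (s + s0)))"
    using sum.reindex_bij_betw[OF bij, of "\<lambda>s. \<psi> (c * s)"] by simp
  also have "\<dots> = \<psi> (c * s0) * (\<Sum>s\<in>J. \<psi> (c * s))"
    by (simp add: distrib_left psi_add sum_distrib_left mult.commute)
  finally have "(1 - \<psi> (c * s0)) * (\<Sum>s\<in>J. \<psi> (c * s)) = 0" by (simp add: algebra_simps)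
  with ne show ?thesis by simp
qed

lemma sum_ideal_char_cases:
  assumes J: "ring_ideal J"
  shows "(\<Sum>s\<in>J. \<psi> (c * s)) = (if \<forall>s\<in>J. \<psi> (c * s) = 1 then of_nat (card J) else 0)"
  using sum_ideal_char[OF J] by auto

lemma sum_univ_char:
  assumes "s \<noteq> 0" shows "(\<Sum>r\<in>UNIV. \<psi> (r * s)) = 0"
proof -
  have "ring_ideal (range (\<lambda>r. r * s))" by (rule range_ideal)
  moreover have "range (\<lambda>r. r * s) \<noteq> {0}" using assms by (metis mult_1_left rangeI singletonD)
  ultimately obtain r0 where "\<psi> (r0 * s) \<noteq> 1" using psi_nontriv by blast
  then show ?thesis using sum_ideal_char[OF univ_ideal, of r0 s] by (simp add: mult.commute)
qed

lemma card_A_bound: "card A * card M \<le> card (UNIV::'a set)"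
proof -
  define P where "P = (\<lambda>r. \<forall>s\<in>A. \<psi> (r * s) = 1)"
  have "(\<Sum>r\<in>UNIV. \<Sum>s\<in>A. \<psi> (r * s)) = (\<Sum>s\<in>A. \<Sum>r\<in>UNIV. \<psi> (r * s))"
    by (rule sum.swap)
  also have "\<dots> = (\<Sum>s\<in>A. if s = 0 then of_nat (card (UNIV::'a set)) else 0)"
  proof (rule sum.cong)
    fix s assume "s \<in> A"
    show "(\<Sum>r\<in>UNIV. \<psi> (r * s)) = (if s = 0 then of_nat (card (UNIV::'a set)) else 0)"
    proof (cases "s = 0")
      case True then show ?thesis by (simp add: psi_0)
    next
      case False then show ?thesis using sum_univ_char[OF False] by simp
    qed
  qed simp
  also have "\<dots> = of_nat (card (UNIV::'a set))"
    using ideal_zero[OF A_ideal] by (simp add: sum.delta)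
  finally have e1: "(\<Sum>r\<in>UNIV. \<Sum>s\<in>A. \<psi> (r * s)) = of_nat (card (UNIV::'a set))" .
  have "(\<Sum>r\<in>UNIV. \<Sum>s\<in>A. \<psi> (r * s)) = (\<Sum>r\<in>UNIV. if P r then of_nat (card A) else (0::complex))"
  proof (rule sum.cong)
    fix r :: 'a
    show "(\<Sum>s\<in>A. \<psi> (r * s)) = (if P r then of_nat (card A) else 0)"
      unfolding P_def by (rule sum_ideal_char_cases[OF A_ideal])
  qed simp
  also have "\<dots> = (\<Sum>r\<in>{r. P r}. of_nat (card A))"
    by (subst sum.inter_filter[symmetric]) simp_all
  also have "\<dots> = of_nat (card A * card {r. P r})" by simp
  finally have "of_nat (card A * card {r. P r}) = (of_nat (card (UNIV::'a set)) :: complex)"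
    using e1 by simp
  then have e2: "card A * card {r. P r} = card (UNIV::'a set)" by (simp only: of_nat_eq_iff)
  have "M \<subseteq> {r. P r}" using M_mult_A psi_0 by (auto simp: P_def)
  then have "card M \<le> card {r. P r}" by (simp add: card_mono)
  then have "card A * card M \<le> card A * card {r. P r}" by (rule mult_le_mono2)
  then show ?thesis using e2 by simp
qed

lemma card_Rz:
  assumes z: "z \<in> A" "z \<noteq> 0"
  shows "card (range (\<lambda>r. r * z)) * card M = card (UNIV::'a set)"
proof -
  have fib: "card {r. r * z = y} = card M" if yr: "y \<in> range (\<lambda>r. r * z)" for y
  proof -
    obtain r0 where r0: "y = r0 * z" using yr by blast
    have "{r. r * z = y} = (\<lambda>m. r0 + m) ` M"
    proof (rule set_eqI, rule iffI)
      fix r assume "r \<in> {r. r * z = y}"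
      then have "(r - r0) * z = 0" using r0 by (simp add: algebra_simps)
      have rm: "r - r0 \<in> M"
      proof (rule ccontr)
        assume "r - r0 \<notin> M"
        then have "r - r0 \<in> U" using inM_iff by blast
        then have "z = 0" using unit_zero \<open>(r - r0) * z = 0\<close> by blast
        then show False using z(2) by simp
      qed
      show "r \<in> (\<lambda>m. r0 + m) ` M" by (rule image_eqI[where x="r - r0"]) (simp_all add: rm)
    next
      fix r assume "r \<in> (\<lambda>m. r0 + m) ` M"
      then obtain m where m: "m \<in> M" "r = r0 + m" by blast
      have "m * z = 0" using M_mult_A[OF m(1) z(1)] .
      then show "r \<in> {r. r * z = y}" using m(2) r0 by (simp add: distrib_right)
    qed
    moreover have "inj_on (\<lambda>m. r0 + m) M" by (rule inj_onI) simp
    ultimately show ?thesis by (simp add: card_image)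
  qed
  have g: "(\<Sum>y\<in>range (\<lambda>r. r * z). sum (\<lambda>_. 1::nat) {x. x \<in> UNIV \<and> x * z = y}) = sum (\<lambda>_. 1) (UNIV::'a set)"
    by (rule sum.group[of "UNIV::'a set" "range (\<lambda>r. r * z)" "\<lambda>r. r * z" "\<lambda>_. 1::nat"]) auto
  have "card (UNIV::'a set) = (\<Sum>y\<in>range (\<lambda>r. r * z). card {r. r * z = y})"
    using g by (simp only: UNIV_I simp_thms card_eq_sum[symmetric])
  also have "\<dots> = (\<Sum>y\<in>range (\<lambda>r. r * z). card M)" by (rule sum.cong) (simp_all add: fib)
  also have "\<dots> = card (range (\<lambda>r. r * z)) * card M" by simp
  finally show ?thesis by simp
qed

lemma socle:
  assumes z: "z \<in> A" "z \<noteq> 0"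
  shows "A = range (\<lambda>r. r * z)"
proof -
  have sub: "range (\<lambda>r. r * z) \<subseteq> A" using ideal_mult[OF A_ideal z(1)] by auto
  obtain x where "x \<in> M" "x \<noteq> 0" using M_nonzero by blast
  then have "card M > 0" by (auto simp: card_gt_0_iff)
  moreover have "card A * card M \<le> card (range (\<lambda>r. r * z)) * card M"
    using card_A_bound card_Rz[OF z] by simp
  ultimately have "card A \<le> card (range (\<lambda>r. r * z))" by simp
  then have "range (\<lambda>r. r * z) = A" using card_seteq[OF _ sub] by simp
  then show ?thesis by simp
qed

lemma card_A: "card A * card M = card (UNIV::'a set)"
  using A_nonzero socle card_Rz by metis

lemma A_in_ideal:
  assumes "ring_ideal I" "I \<noteq> {0}" shows "A \<subseteq> I"
proof -
  have "\<not> I \<subseteq> {0}" using assms ideal_zero by blast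
  then obtain z where z: "z \<in> I" "z \<noteq> 0" "\<forall>n\<in>M. n * z = 0"
    using exists_socle_elem[OF zero_ideal assms(1)] by auto
  then have "z \<in> A" by (simp add: A_def)
  show ?thesis
  proof
    fix x assume "x \<in> A"
    then obtain r where "x = r * z" using socle[OF \<open>z \<in> A\<close> z(2)] by blast
    then show "x \<in> I" using ideal_mult[OF assms(1) z(1)] by simp
  qed
qed

end


lemma finite_not_inj_nat:
  fixes f :: "nat \<Rightarrow> 'a::finite"
  shows "\<exists>i j. i < j \<and> f i = f j"
proof -
  have "\<not> inj_on f {0..card (UNIV::'a set)}"
  proof
    assume "inj_on f {0..card (UNIV::'a set)}"
    then have "card {0..card (UNIV::'a set)} \<le> card (UNIV::'a set)"
      by (rule card_inj_on_le) auto
    then show False by simp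
  qed
  then obtain i j where "i \<noteq> j" "f i = f j" unfolding inj_on_def by blast
  then show ?thesis by (metis linorder_neqE_nat)
qed

lemma unit_power_one:
  fixes u :: "'a::{comm_ring_1,finite}"
  assumes "u \<in> units" shows "\<exists>n>0. u ^ n = 1"
proof -
  obtain i j where ij: "i < j" "u ^ i = u ^ j" using finite_not_inj_nat[of "\<lambda>n. u ^ n"] by blast
  have ui: "u ^ i \<in> units" using assms by (induct i) (auto intro: units_mult)
  have "u ^ i * u ^ (j - i) = u ^ (i + (j - i))" by (simp only: power_add)
  also have "i + (j - i) = j" using ij(1) by simp
  finally have "u ^ i * u ^ (j - i) = u ^ i * 1" using ij(2) by simp
  then have "u ^ (j - i) = 1" by (rule unit_cancel[OF ui])
  then show ?thesis using ij(1) by (intro exI[of _ "j - i"]) simp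
qed

lemma add_order:
  fixes x :: "'a::{comm_ring_1,finite}"
  shows "\<exists>n>0. of_nat n * x = 0"
proof -
  obtain i j where ij: "i < j" "of_nat i * x = of_nat j * x"
    using finite_not_inj_nat[of "\<lambda>n. of_nat n * x"] by blast
  have "of_nat j * x = of_nat i * x + of_nat (j - i) * x"
    using ij(1) by (simp add: of_nat_diff algebra_simps)
  then have "of_nat (j - i) * x = 0" using ij(2) by simp
  then show ?thesis using ij(1) by (intro exI[of _ "j - i"]) simp
qed

lemma cnj_root_unity: "(z::complex) ^ n = 1 \<Longrightarrow> n > 0 \<Longrightarrow> cnj z * z = 1"
  using power_eq_1_iff[of z n] complex_norm_square[of z] by (simp add: mult.commute)

lemma mc_mult: "mult_char \<chi> \<Longrightarrow> u \<in> units \<Longrightarrow> v \<in> units \<Longrightarrow> \<chi> (u * v) = \<chi> u * \<chi> v"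
  by (simp add: mult_char_def)
lemma mc_nz: "mult_char \<chi> \<Longrightarrow> u \<in> units \<Longrightarrow> \<chi> u \<noteq> 0"
  by (simp add: mult_char_def)
lemma mc_one: "mult_char \<chi> \<Longrightarrow> \<chi> 1 = 1"
  using mc_mult[of \<chi> 1 1] mc_nz[of \<chi> 1] by simp
lemma mc_inv: "mult_char \<chi> \<Longrightarrow> u \<in> units \<Longrightarrow> \<chi> (unit_inv u) * \<chi> u = 1"
  using mc_mult[of \<chi> "unit_inv u" u] unit_inv_unit[of u] unit_inv_prop[of u] mc_one[of \<chi>]
  by (simp add: mult.commute)
lemma mc_inv': "mult_char \<chi> \<Longrightarrow> u \<in> units \<Longrightarrow> \<chi> (unit_inv u) = inverse (\<chi> u)"
  using mc_inv[of \<chi> u] inverse_unique[of "\<chi> u" "\<chi> (unit_inv u)"] by (simp add: mult.commute)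
lemma mc_power: "mult_char \<chi> \<Longrightarrow> u \<in> units \<Longrightarrow> \<chi> (u ^ n) = \<chi> u ^ n"
proof (induct n)
  case 0 then show ?case by (simp add: mc_one)
next
  case (Suc n)
  have "u ^ n \<in> units" using Suc.prems by (induct n) (auto intro: units_mult)
  then show ?case using Suc by (simp add: mc_mult)
qed
lemma mc_cnj:
  fixes \<chi> :: "'a::{comm_ring_1,finite} \<Rightarrow> complex"
  assumes "mult_char \<chi>" "u \<in> units" shows "cnj (\<chi> u) = \<chi> (unit_inv u)"
proof -
  obtain n where n: "n > 0" "u ^ n = 1" using unit_power_one[OF assms(2)] by blast
  then have "\<chi> u ^ n = 1" using mc_power[OF assms] mc_one[OF assms(1)] by metis
  then have "cnj (\<chi> u) * \<chi> u = 1" using n(1) by (rule cnj_root_unity)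
  then show ?thesis using mc_inv[OF assms] mc_nz[OF assms] by (metis mult_right_cancel)
qed

context lr begin

lemma psi_nat: "\<psi> (of_nat n * x) = \<psi> x ^ n"
  by (induct n) (simp_all add: psi_0 psi_add distrib_right)

lemma psi_cnj: "cnj (\<psi> x) = \<psi> (- x)"
proof -
  obtain n where n: "n > 0" "of_nat n * x = 0" using add_order by blast
  then have "\<psi> x ^ n = 1" using psi_nat[of n x] psi_0 by simp
  then have "cnj (\<psi> x) * \<psi> x = 1" using n(1) by (rule cnj_root_unity)
  then show ?thesis using psi_neg[of x] psi_nz[of x] by (metis mult_right_cancel)
qed

definition I0 :: "('a \<Rightarrow> complex) \<Rightarrow> 'a set" where
  "I0 \<chi> = {x \<in> M. \<forall>r. \<chi> (1 + r * x) = 1}"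

lemma I0_sub_M: "I0 \<chi> \<subseteq> M" by (auto simp: I0_def)

lemma I0_ideal:
  assumes mc: "mult_char \<chi>" shows "ring_ideal (I0 \<chi>)"
  unfolding ring_ideal_def
proof (intro conjI ballI allI impI)
  show "0 \<in> I0 \<chi>" using ideal_zero[OF M_ideal] mc_one[OF mc] by (simp add: I0_def)
next
  fix x y assume x: "x \<in> I0 \<chi>" and y: "y \<in> I0 \<chi>"
  show "x + y \<in> I0 \<chi>"
    unfolding I0_def
  proof (intro CollectI conjI allI)
    show "x + y \<in> M" using x y ideal_add[OF M_ideal] by (auto simp: I0_def)
    fix r
    have xm: "x \<in> M" and ym: "y \<in> M" using x y by (auto simp: I0_def)
    have u1: "1 + r * x \<in> U" using one_plus_M ideal_mult[OF M_ideal xm] by blast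
    let ?r' = "unit_inv (1 + r * x) * r"
    have u2: "1 + ?r' * y \<in> U" using one_plus_M ideal_mult[OF M_ideal ym] by blast
    have e: "(1 + r * x) * (1 + ?r' * y) = (1 + r * x) + ((1 + r * x) * unit_inv (1 + r * x)) * (r * y)"
      by (simp only: distrib_left mult_1_right mult.assoc)
    have "1 + r * (x + y) = (1 + r * x) * (1 + ?r' * y)"
      unfolding e unit_inv_prop[OF u1] by (simp add: distrib_left add.assoc)
    then have "\<chi> (1 + r * (x + y)) = \<chi> (1 + r * x) * \<chi> (1 + ?r' * y)"
      using mc_mult[OF mc u1 u2] by simp
    also have "\<dots> = 1" using x y by (simp add: I0_def)
    finally show "\<chi> (1 + r * (x + y)) = 1" .
  qed
next
  fix r x assume x: "x \<in> I0 \<chi>"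
  have xm: "x \<in> M" and xr: "\<forall>s. \<chi> (1 + s * x) = 1" using x by (auto simp: I0_def)
  have "\<chi> (1 + s * (r * x)) = 1" for s using xr[rule_format, of "s * r"] by (simp add: mult.assoc)
  then show "r * x \<in> I0 \<chi>" using ideal_mult[OF M_ideal xm] by (simp add: I0_def)
qed

lemma I0_triv: "x \<in> I0 \<chi> \<Longrightarrow> \<chi> (1 + x) = 1"
  unfolding I0_def by (metis (mono_tags, lifting) mem_Collect_eq mult_1_left)

lemma I0_max:
  assumes "ring_ideal J" "J \<subseteq> M" "\<forall>x\<in>J. \<chi> (1 + x) = 1"
  shows "J \<subseteq> I0 \<chi>"
  using assms ideal_mult[OF assms(1)] by (auto simp: I0_def)

lemma conductor_eq:
  assumes mc: "mult_char \<chi>" and nt: "\<not> trivial_char \<chi>"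
  shows "conductor \<chi> = I0 \<chi>"
proof -
  let ?P = "\<lambda>I. ring_ideal I \<and> I \<subseteq> M \<and> (\<forall>x\<in>I. \<chi> (1 + x) = 1)"
  have "(THE I. ?P I \<and> (\<forall>J. ?P J \<longrightarrow> J \<subseteq> I)) = I0 \<chi>"
  proof (rule the_equality)
    show "?P (I0 \<chi>) \<and> (\<forall>J. ?P J \<longrightarrow> J \<subseteq> I0 \<chi>)"
      using I0_ideal[OF mc] I0_sub_M I0_triv I0_max by blast
    fix I assume "?P I \<and> (\<forall>J. ?P J \<longrightarrow> J \<subseteq> I)"
    then show "I = I0 \<chi>"
      using I0_ideal[OF mc] I0_sub_M I0_triv I0_max by (meson subset_antisym)
  qed
  then show ?thesis using nt by (simp add: conductor_def)
qed

lemma nonprim_I0: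
  assumes mc: "mult_char \<chi>" and np: "\<not> primitive_mult_char \<chi>" and nt: "\<not> trivial_char \<chi>"
  shows "I0 \<chi> \<noteq> {0}"
  using conductor_eq[OF mc nt] np by (simp add: primitive_mult_char_def)

lemma nonprim_A:
  assumes mc: "mult_char \<chi>" and np: "\<not> primitive_mult_char \<chi>" and a: "a \<in> A"
  shows "\<chi> (1 + a) = 1"
proof (cases "trivial_char \<chi>")
  case True
  then show ?thesis using one_plus_M A_sub_M a by (auto simp: trivial_char_def)
next
  case False
  then have "A \<subseteq> I0 \<chi>" using A_in_ideal I0_ideal[OF mc] nonprim_I0[OF mc np] by blast
  then show ?thesis using a I0_triv by blast
qed

end


locale lr2 = lr \<psi> for \<psi> :: "'a::{comm_ring_1,finite} \<Rightarrow> complex" +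
  fixes \<tau> \<chi> :: "'a \<Rightarrow> complex"
  assumes mt: "mult_char \<tau>" and mx: "mult_char \<chi>"
    and npt: "\<not> primitive_mult_char \<tau>" and npx: "\<not> primitive_mult_char \<chi>"
begin

definition G :: "'a \<Rightarrow> complex" where
  "G b = (\<Sum>a\<in>U. \<chi> a * \<psi> (a * b))"

lemma G_scale:
  assumes c: "c \<in> U" shows "G (c * b) = \<chi> (unit_inv c) * G b"
proof -
  have ic: "unit_inv c \<in> U" by (rule unit_inv_unit[OF c])
  have "G (c * b) = (\<Sum>a\<in>U. \<chi> (unit_inv c * a) * \<psi> ((unit_inv c * a) * (c * b)))"
    unfolding G_def using sum.reindex_bij_betw[OF bij_mult_units[OF ic], of "\<lambda>a. \<chi> a * \<psi> (a * (c * b))"]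
    by simp
  also have "\<dots> = (\<Sum>a\<in>U. \<chi> (unit_inv c) * (\<chi> a * \<psi> (a * b)))"
  proof (rule sum.cong)
    fix a assume a: "a \<in> U"
    have "(unit_inv c * a) * (c * b) = (c * unit_inv c) * (a * b)" by (simp add: ac_simps)
    then have "(unit_inv c * a) * (c * b) = a * b" using unit_inv_prop[OF c] by simp
    then show "\<chi> (unit_inv c * a) * \<psi> ((unit_inv c * a) * (c * b)) = \<chi> (unit_inv c) * (\<chi> a * \<psi> (a * b))"
      using mc_mult[OF mx ic a] by simp
  qed simp
  also have "\<dots> = \<chi> (unit_inv c) * G b" unfolding G_def by (simp add: sum_distrib_left)
  finally show ?thesis .
qed

lemma G_shift_zero:
  assumes J: "ring_ideal J" "J \<subseteq> M" and triv: "\<forall>j\<in>J. \<chi> (1 + j) = 1"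
    and j0: "j0 \<in> J" and ne: "\<psi> (j0 * b) \<noteq> 1"
  shows "G b = 0"
proof -
  have j0M: "j0 \<in> M" using j0 J(2) by blast
  have bij: "bij_betw (\<lambda>a. a + j0) U U"
  proof (rule bij_betw_byWitness[where f'="\<lambda>a. a - j0"])
    show "(\<lambda>a. a + j0) ` U \<subseteq> U" using unit_plus_M j0M by blast
    have "a - j0 \<in> U" if "a \<in> U" for a
      using unit_plus_M[OF that ideal_uminus[OF M_ideal j0M]] by (simp only: diff_conv_add_uminus)
    then show "(\<lambda>a. a - j0) ` U \<subseteq> U" by blast
  qed simp_all
  have "G b = (\<Sum>a\<in>U. \<chi> (a + j0) * \<psi> ((a + j0) * b))"
    unfolding G_def using sum.reindex_bij_betw[OF bij, of "\<lambda>a. \<chi> a * \<psi> (a * b)"] by simp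
  also have "\<dots> = (\<Sum>a\<in>U. \<psi> (j0 * b) * (\<chi> a * \<psi> (a * b)))"
  proof (rule sum.cong)
    fix a assume a: "a \<in> U"
    have "a * (1 + unit_inv a * j0) = a + (a * unit_inv a) * j0"
      by (simp only: distrib_left mult_1_right mult.assoc)
    then have e: "a + j0 = a * (1 + unit_inv a * j0)" using unit_inv_prop[OF a] by simp
    have jj: "unit_inv a * j0 \<in> J" using ideal_mult[OF J(1) j0] .
    have u: "1 + unit_inv a * j0 \<in> U" using one_plus_M jj J(2) by blast
    have "\<chi> (a + j0) = \<chi> a" unfolding e using mc_mult[OF mx a u] triv jj by simp
    moreover have "\<psi> ((a + j0) * b) = \<psi> (a * b) * \<psi> (j0 * b)" by (simp add: distrib_right psi_add)
    ultimately show "\<chi> (a + j0) * \<psi> ((a + j0) * b) = \<psi> (j0 * b) * (\<chi> a * \<psi> (a * b))" by simp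
  qed simp
  also have "\<dots> = \<psi> (j0 * b) * G b" unfolding G_def by (simp add: sum_distrib_left)
  finally have "(1 - \<psi> (j0 * b)) * G b = 0" by (simp add: algebra_simps)
  with ne show ?thesis by simp
qed

lemma G_one: "G 1 = 0"
proof -
  have "A \<noteq> {0}" using A_nonzero by blast
  then obtain s where s: "s \<in> A" "\<psi> s \<noteq> 1" using psi_nontriv[OF A_ideal] by blast
  show ?thesis
    by (rule G_shift_zero[OF A_ideal A_sub_M _ s(1)]) (use s nonprim_A[OF mx npx] in auto)
qed

lemma G_unit: "c \<in> U \<Longrightarrow> G c = 0"
  using G_scale[of c 1] G_one by simp

end


context lr2 begin

abbreviation K where "K a \<equiv> kloosterman \<psi> \<tau> a"

lemma K_cnj: "cnj (K a) = (\<Sum>v\<in>U. \<tau> (unit_inv v) * \<psi> (- (v + a * unit_inv v)))"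
  unfolding kloosterman_def cnj_sum
  by (rule sum.cong) (simp_all add: mc_cnj[OF mt] psi_cnj)

lemma F_ident:
  assumes v: "v \<in> U" and b: "b \<in> U" and t: "t \<in> U"
  shows "\<chi> (v * b) * \<tau> (v * t) * \<tau> (unit_inv v) * \<psi> (v * t + v * b * unit_inv (v * t))
           * \<psi> (- (v + v * b * unit_inv v))
         = \<chi> v * (\<chi> b * \<tau> t * \<psi> (v * (t - 1)) * \<psi> (b * (unit_inv t - 1)))"
proof -
  have iv: "v * unit_inv v = 1" by (rule unit_inv_prop[OF v])
  have h1: "v * b * unit_inv (v * t) = b * unit_inv t"
  proof -
    have "v * b * unit_inv (v * t) = (v * unit_inv v) * (b * unit_inv t)"
      using unit_inv_mult[OF v t] by (simp add: ac_simps)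
    then show ?thesis using iv by simp
  qed
  have h2: "v * b * unit_inv v = b"
  proof -
    have "v * b * unit_inv v = (v * unit_inv v) * b" by (simp add: ac_simps)
    then show ?thesis using iv by simp
  qed
  have h3: "\<psi> (v * t + b * unit_inv t) * \<psi> (- (v + b)) = \<psi> (v * (t - 1)) * \<psi> (b * (unit_inv t - 1))"
  proof -
    have "v * (t - 1) + b * (unit_inv t - 1) = (v * t + b * unit_inv t) + - (v + b)"
      by (simp add: algebra_simps)
    then show ?thesis using psi_add by metis
  qed
  have h4: "\<tau> (v * t) * \<tau> (unit_inv v) = \<tau> t"
    using mc_mult[OF mt v t] mc_inv[OF mt v] by (simp add: ac_simps)
  have h5: "\<chi> (v * b) = \<chi> v * \<chi> b" using mc_mult[OF mx v b] .
  have "\<chi> (v * b) * \<tau> (v * t) * \<tau> (unit_inv v) * \<psi> (v * t + v * b * unit_inv (v * t))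
           * \<psi> (- (v + v * b * unit_inv v))
      = \<chi> (v * b) * (\<tau> (v * t) * \<tau> (unit_inv v)) * (\<psi> (v * t + b * unit_inv t) * \<psi> (- (v + b)))"
    unfolding h1 h2 by (simp only: ac_simps)
  also have "\<dots> = \<chi> v * \<chi> b * \<tau> t * (\<psi> (v * (t - 1)) * \<psi> (b * (unit_inv t - 1)))"
    unfolding h3 h4 h5 ..
  finally show ?thesis by (simp only: ac_simps)
qed

lemma S_formula:
  "(\<Sum>a\<in>U. \<chi> a * complex_of_real ((cmod (K a))\<^sup>2))
     = (\<Sum>t\<in>U. \<tau> t * G (t - 1) * G (unit_inv t - 1))"
proof -
  define F where "F = (\<lambda>a u v. \<chi> a * \<tau> u * \<tau> (unit_inv v) * \<psi> (u + a * unit_inv u)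
                        * \<psi> (- (v + a * unit_inv v)))"
  define H where "H = (\<lambda>v b t. \<chi> v * (\<chi> b * \<tau> t * \<psi> (v * (t - 1)) * \<psi> (b * (unit_inv t - 1))))"
  have "(\<Sum>a\<in>U. \<chi> a * complex_of_real ((cmod (K a))\<^sup>2)) = (\<Sum>a\<in>U. \<Sum>u\<in>U. \<Sum>v\<in>U. F a u v)"
  proof (rule sum.cong)
    fix a assume "a \<in> U"
    have "\<chi> a * complex_of_real ((cmod (K a))\<^sup>2) = \<chi> a * (K a * cnj (K a))"
      by (simp only: complex_norm_square)
    also have "\<dots> = \<chi> a * ((\<Sum>u\<in>U. \<tau> u * \<psi> (u + a * unit_inv u)) *
                  (\<Sum>v\<in>U. \<tau> (unit_inv v) * \<psi> (- (v + a * unit_inv v))))"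
      unfolding K_cnj by (simp add: kloosterman_def)
    also have "\<dots> = \<chi> a * (\<Sum>u\<in>U. \<Sum>v\<in>U. (\<tau> u * \<psi> (u + a * unit_inv u)) *
                  (\<tau> (unit_inv v) * \<psi> (- (v + a * unit_inv v))))"
      by (simp only: sum_product)
    also have "\<dots> = (\<Sum>u\<in>U. \<Sum>v\<in>U. \<chi> a * ((\<tau> u * \<psi> (u + a * unit_inv u)) *
                  (\<tau> (unit_inv v) * \<psi> (- (v + a * unit_inv v)))))"
      by (simp only: sum_distrib_left)
    also have "\<dots> = (\<Sum>u\<in>U. \<Sum>v\<in>U. F a u v)"
      unfolding F_def by (simp only: ac_simps)
    finally show "\<chi> a * complex_of_real ((cmod (K a))\<^sup>2) = (\<Sum>u\<in>U. \<Sum>v\<in>U. F a u v)" .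
  qed simp
  also have "\<dots> = (\<Sum>a\<in>U. \<Sum>v\<in>U. \<Sum>u\<in>U. F a u v)"
    by (rule sum.cong[OF refl], rule sum.swap)
  also have "\<dots> = (\<Sum>v\<in>U. \<Sum>a\<in>U. \<Sum>u\<in>U. F a u v)"
    by (rule sum.swap)
  also have "\<dots> = (\<Sum>v\<in>U. \<Sum>b\<in>U. \<Sum>t\<in>U. H v b t)"
  proof (rule sum.cong[OF refl])
    fix v assume v: "v \<in> U"
    have "(\<Sum>a\<in>U. \<Sum>u\<in>U. F a u v) = (\<Sum>b\<in>U. \<Sum>u\<in>U. F (v * b) u v)"
      using sum.reindex_bij_betw[OF bij_mult_units[OF v], of "\<lambda>a. \<Sum>u\<in>U. F a u v"] by simp
    also have "\<dots> = (\<Sum>b\<in>U. \<Sum>t\<in>U. F (v * b) (v * t) v)"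
      by (rule sum.cong[OF refl], rule sum.reindex_bij_betw[OF bij_mult_units[OF v], symmetric])
    also have "\<dots> = (\<Sum>b\<in>U. \<Sum>t\<in>U. H v b t)"
      by (intro sum.cong refl) (simp only: F_def H_def F_ident[OF v])
    finally show "(\<Sum>a\<in>U. \<Sum>u\<in>U. F a u v) = (\<Sum>b\<in>U. \<Sum>t\<in>U. H v b t)" .
  qed
  also have "\<dots> = (\<Sum>v\<in>U. \<Sum>t\<in>U. \<Sum>b\<in>U. H v b t)"
    by (rule sum.cong[OF refl], rule sum.swap)
  also have "\<dots> = (\<Sum>t\<in>U. \<Sum>v\<in>U. \<Sum>b\<in>U. H v b t)"
    by (rule sum.swap)
  also have "\<dots> = (\<Sum>t\<in>U. \<tau> t * G (t - 1) * G (unit_inv t - 1))"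
  proof (rule sum.cong[OF refl])
    fix t assume t: "t \<in> U"
    have "\<tau> t * G (t - 1) * G (unit_inv t - 1) =
      (\<Sum>v\<in>U. \<Sum>b\<in>U. \<tau> t * (\<chi> v * \<psi> (v * (t - 1))) * (\<chi> b * \<psi> (b * (unit_inv t - 1))))"
    proof -
      have "\<tau> t * G (t - 1) * G (unit_inv t - 1) = \<tau> t * (G (t - 1) * G (unit_inv t - 1))"
        by (simp only: mult.assoc)
      also have "\<dots> = \<tau> t * (\<Sum>v\<in>U. \<Sum>b\<in>U. (\<chi> v * \<psi> (v * (t - 1))) * (\<chi> b * \<psi> (b * (unit_inv t - 1))))"
        unfolding G_def by (simp only: sum_product)
      also have "\<dots> = (\<Sum>v\<in>U. \<Sum>b\<in>U. \<tau> t * ((\<chi> v * \<psi> (v * (t - 1))) * (\<chi> b * \<psi> (b * (unit_inv t - 1)))))"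
        by (simp only: sum_distrib_left)
      finally show ?thesis by (simp only: ac_simps)
    qed
    also have "\<dots> = (\<Sum>v\<in>U. \<Sum>b\<in>U. H v b t)"
      unfolding H_def by (simp only: ac_simps)
    finally show "(\<Sum>v\<in>U. \<Sum>b\<in>U. H v b t) = \<tau> t * G (t - 1) * G (unit_inv t - 1)" by simp
  qed
  finally show ?thesis .
qed

end


context lr2 begin

lemma S_M:
  "(\<Sum>t\<in>U. \<tau> t * G (t - 1) * G (unit_inv t - 1))
     = \<chi> (- 1) * (\<Sum>m\<in>M. \<tau> (1 + m) * \<chi> (1 + m) * G m ^ 2)"
proof -
  define f where "f = (\<lambda>t. \<tau> t * G (t - 1) * G (unit_inv t - 1))"
  have "(\<Sum>t\<in>U. f t) = (\<Sum>t\<in>U. if t - 1 \<in> M then f t else 0)"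
  proof (rule sum.cong[OF refl])
    fix t assume t: "t \<in> U"
    show "f t = (if t - 1 \<in> M then f t else 0)"
    proof (cases "t - 1 \<in> M")
      case False
      then have "t - 1 \<in> U" using inM_iff by blast
      then have "G (t - 1) = 0" by (rule G_unit)
      then show ?thesis using False by (simp add: f_def)
    qed simp
  qed
  also have "\<dots> = (\<Sum>t\<in>{t\<in>U. t - 1 \<in> M}. f t)"
    by (rule sum.inter_filter[symmetric]) simp
  also have "\<dots> = (\<Sum>m\<in>M. f (1 + m))"
  proof -
    have bij: "bij_betw (\<lambda>m. 1 + m) M {t\<in>U. t - 1 \<in> M}"
    proof (rule bij_betw_byWitness[where f'="\<lambda>t. t - 1"])
      show "(\<lambda>m. 1 + m) ` M \<subseteq> {t\<in>U. t - 1 \<in> M}" using one_plus_M by auto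
      show "(\<lambda>t. t - 1) ` {t\<in>U. t - 1 \<in> M} \<subseteq> M" by auto
    qed simp_all
    show ?thesis using sum.reindex_bij_betw[OF bij, of f] by simp
  qed
  also have "\<dots> = (\<Sum>m\<in>M. \<chi> (- 1) * (\<tau> (1 + m) * \<chi> (1 + m) * G m ^ 2))"
  proof (rule sum.cong[OF refl])
    fix m assume m: "m \<in> M"
    have u: "1 + m \<in> U" using one_plus_M[OF m] .
    have iu: "unit_inv (1 + m) \<in> U" using unit_inv_unit[OF u] .
    have p: "unit_inv (1 + m) * (1 + m) = 1" using unit_inv_prop[OF u] by (simp add: mult.commute)
    have e1: "unit_inv (1 + m) - 1 = (- unit_inv (1 + m)) * m"
    proof -
      have "unit_inv (1 + m) * (1 + m) = unit_inv (1 + m) + unit_inv (1 + m) * m"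
        by (simp add: distrib_left)
      then show ?thesis using p by (simp add: algebra_simps)
    qed
    have mu: "- unit_inv (1 + m) \<in> U" using units_minus[OF iu] .
    have e2: "unit_inv (- unit_inv (1 + m)) = - (1 + m)"
      using unit_inv_minus[OF iu] unit_inv_inv[OF u] by simp
    have e3: "\<chi> (- (1 + m)) = \<chi> (- 1) * \<chi> (1 + m)"
      using mc_mult[OF mx units_minus[OF units_one] u] by simp
    have "G (unit_inv (1 + m) - 1) = \<chi> (- 1) * \<chi> (1 + m) * G m"
      unfolding e1 G_scale[OF mu] e2 e3 ..
    then show "f (1 + m) = \<chi> (- 1) * (\<tau> (1 + m) * \<chi> (1 + m) * G m ^ 2)"
      by (simp add: f_def power2_eq_square ac_simps)
  qed
  also have "\<dots> = \<chi> (- 1) * (\<Sum>m\<in>M. \<tau> (1 + m) * \<chi> (1 + m) * G m ^ 2)"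
    by (simp only: sum_distrib_left)
  finally show ?thesis by (simp add: f_def)
qed

end


context lr2 begin

definition T where "T = (\<Sum>m\<in>M. \<tau> (1 + m) * \<chi> (1 + m) * G m ^ 2)"

lemma image_ideal: "ring_ideal J \<Longrightarrow> ring_ideal ((\<lambda>j. j * m) ` J)"
  unfolding ring_ideal_def
proof (intro conjI ballI allI impI)
  assume J: "0 \<in> J \<and> (\<forall>x\<in>J. \<forall>y\<in>J. x + y \<in> J) \<and> (\<forall>r x. x \<in> J \<longrightarrow> r * x \<in> J)"
  show "0 \<in> (\<lambda>j. j * m) ` J" using J by (intro image_eqI[where x=0]) simp_all
  fix x y assume "x \<in> (\<lambda>j. j * m) ` J" "y \<in> (\<lambda>j. j * m) ` J"
  then obtain a b where ab: "a \<in> J" "b \<in> J" "x = a * m" "y = b * m" by blast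
  show "x + y \<in> (\<lambda>j. j * m) ` J"
    by (rule image_eqI[where x="a + b"]) (use ab J in \<open>simp_all add: distrib_right\<close>)
next
  assume J: "0 \<in> J \<and> (\<forall>x\<in>J. \<forall>y\<in>J. x + y \<in> J) \<and> (\<forall>r x. x \<in> J \<longrightarrow> r * x \<in> J)"
  fix r x assume "x \<in> (\<lambda>j. j * m) ` J"
  then obtain a where a: "a \<in> J" "x = a * m" by blast
  show "r * x \<in> (\<lambda>j. j * m) ` J"
    by (rule image_eqI[where x="r * a"]) (use a J in \<open>simp_all add: mult.assoc\<close>)
qed

lemma support_J:
  assumes J: "ring_ideal J" "J \<subseteq> M" and triv: "\<forall>j\<in>J. \<chi> (1 + j) = 1" and nz: "G m \<noteq> 0"
  shows "\<forall>j\<in>J. j * m = 0"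
proof -
  have "\<forall>j\<in>J. \<psi> (j * m) = 1" using G_shift_zero[OF J triv] nz by blast
  then have "\<forall>y\<in>(\<lambda>j. j * m) ` J. \<psi> y = 1" by blast
  then have "(\<lambda>j. j * m) ` J = {0}" using prim image_ideal[OF J(1)] unfolding primitive_add_char_def by blast
  then show ?thesis by blast
qed

lemma support_A:
  assumes triv: "\<forall>j\<in>M. \<chi> (1 + j) = 1" and nz: "G m \<noteq> 0"
  shows "m \<in> A"
  using support_J[OF M_ideal subset_refl triv nz] by (simp add: A_def)

lemma T_on_A:
  assumes triv: "\<forall>j\<in>M. \<chi> (1 + j) = 1"
  shows "T = (\<Sum>m\<in>A. G m ^ 2)"
  unfolding T_def
proof (rule sum.mono_neutral_cong_right)
  show "finite M" by simp
  show "A \<subseteq> M" by (rule A_sub_M)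
  show "\<forall>i\<in>M - A. \<tau> (1 + i) * \<chi> (1 + i) * G i ^ 2 = 0"
    using support_A[OF triv] by auto
  fix m assume m: "m \<in> A"
  have "\<tau> (1 + m) = 1" using nonprim_A[OF mt npt m] .
  moreover have "\<chi> (1 + m) = 1" using triv A_sub_M m by blast
  ultimately show "\<tau> (1 + m) * \<chi> (1 + m) * G m ^ 2 = G m ^ 2" by simp
qed

lemma sum_U_psi_A:
  assumes s: "s \<in> A" "s \<noteq> 0"
  shows "(\<Sum>a\<in>U. \<psi> (a * s)) = - of_nat (card M)"
proof -
  have UM: "U = UNIV - M" using inM_iff by blast
  have "(\<Sum>a\<in>UNIV. \<psi> (a * s)) = (\<Sum>a\<in>UNIV - M. \<psi> (a * s)) + (\<Sum>a\<in>M. \<psi> (a * s))"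
    by (rule sum.subset_diff) simp_all
  moreover have "(\<Sum>a\<in>UNIV. \<psi> (a * s)) = 0" by (rule sum_univ_char[OF s(2)])
  moreover have "(\<Sum>a\<in>M. \<psi> (a * s)) = of_nat (card M)"
  proof -
    have "(\<Sum>a\<in>M. \<psi> (a * s)) = (\<Sum>a\<in>M. 1)"
      by (rule sum.cong[OF refl]) (simp add: M_mult_A[OF _ s(1)] psi_0)
    then show ?thesis by simp
  qed
  ultimately show ?thesis unfolding UM by (simp add: eq_neg_iff_add_eq_0)
qed

lemma card_U: "card U + card M = card (UNIV::'a set)"
proof -
  have "U = UNIV - M" using inM_iff by blast
  then have "card U = card (UNIV - M)" by simp
  also have "\<dots> = card (UNIV::'a set) - card M" by (rule card_Diff_subset) simp_all
  finally have "card U = card (UNIV::'a set) - card M" .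
  moreover have "card M \<le> card (UNIV::'a set)" by (simp add: card_mono)
  ultimately show ?thesis by simp
qed

lemma char_sum_zero:
  assumes "\<not> trivial_char \<chi>" shows "(\<Sum>a\<in>U. \<chi> a) = 0"
proof -
  obtain c where c: "c \<in> U" "\<chi> c \<noteq> 1" using assms by (auto simp: trivial_char_def)
  have "(\<Sum>a\<in>U. \<chi> a) = (\<Sum>a\<in>U. \<chi> (c * a))"
    using sum.reindex_bij_betw[OF bij_mult_units[OF c(1)], of \<chi>] by simp
  also have "\<dots> = \<chi> c * (\<Sum>a\<in>U. \<chi> a)"
    by (simp add: sum_distrib_left mc_mult[OF mx c(1)])
  finally have "(1 - \<chi> c) * (\<Sum>a\<in>U. \<chi> a) = 0" by (simp add: algebra_simps)
  with c(2) show ?thesis by simp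
qed

end


context lr2 begin

lemma minus_one_unit: "(- 1::'a) \<in> U" using units_minus[OF units_one] .

lemma A_split: "(\<Sum>m\<in>A. f m) = f 0 + (\<Sum>m\<in>A - {0}. f m)"
  using sum.remove[of A 0 f] ideal_zero[OF A_ideal] by simp

lemma case_trivial:
  assumes tr: "trivial_char \<chi>"
  shows "\<chi> (- 1) * T = of_nat (card U * card (UNIV::'a set))"
proof -
  have c1: "\<chi> (- 1) = 1" using tr minus_one_unit by (simp add: trivial_char_def)
  have triv: "\<forall>j\<in>M. \<chi> (1 + j) = 1" using tr one_plus_M by (simp add: trivial_char_def)
  have Gm: "G m = (\<Sum>a\<in>U. \<psi> (a * m))" for m
    unfolding G_def by (rule sum.cong[OF refl]) (use tr in \<open>simp add: trivial_char_def\<close>)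
  have G0: "G 0 = of_nat (card U)" unfolding Gm by (simp add: psi_0)
  have GA: "G m = - of_nat (card M)" if "m \<in> A - {0}" for m
    unfolding Gm using sum_U_psi_A that by blast
  have "T = (\<Sum>m\<in>A. G m ^ 2)" by (rule T_on_A[OF triv])
  also have "\<dots> = G 0 ^ 2 + (\<Sum>m\<in>A - {0}. G m ^ 2)" by (rule A_split)
  also have "(\<Sum>m\<in>A - {0}. G m ^ 2) = (\<Sum>m\<in>A - {0}. of_nat (card M) ^ 2)"
    by (rule sum.cong[OF refl]) (simp add: GA)
  also have "\<dots> = of_nat (card (A - {0}) * card M ^ 2)" by simp
  finally have Te: "T = of_nat (card U ^ 2 + card (A - {0}) * card M ^ 2)" using G0 by simp
  obtain a' where a': "card A = Suc a'"
    using ideal_zero[OF A_ideal] by (metis card_gt_0_iff empty_iff finite gr0_conv_Suc)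
  have cA0: "card (A - {0}) = a'" using a' ideal_zero[OF A_ideal] by simp
  have e1: "Suc a' * card M = card U + card M" using card_A card_U a' by simp
  then have e2: "a' * card M = card U" by simp
  have "card U ^ 2 + a' * card M ^ 2 = card U * (card U + card M)"
    using e2 by (simp add: power2_eq_square algebra_simps)
  then have "card U ^ 2 + a' * card M ^ 2 = card U * card (UNIV::'a set)" using card_U by simp
  then show ?thesis using Te cA0 c1 by simp
qed

lemma gauss_sq:
  assumes sq: "\<forall>u\<in>U. \<chi> u ^ 2 = 1" and triv: "\<forall>j\<in>M. \<chi> (1 + j) = 1"
    and nt: "\<not> trivial_char \<chi>" and m: "m \<in> A" "m \<noteq> 0"
  shows "G m ^ 2 = \<chi> (- 1) * of_nat (card M) * of_nat (card (UNIV::'a set))"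
proof -
  define W where "W = (\<lambda>t. \<Sum>a\<in>U. \<psi> (a * ((1 + t) * m)))"
  have "G m ^ 2 = (\<Sum>a\<in>U. \<Sum>b\<in>U. (\<chi> a * \<psi> (a * m)) * (\<chi> b * \<psi> (b * m)))"
    unfolding power2_eq_square G_def by (rule sum_product)
  also have "\<dots> = (\<Sum>a\<in>U. \<Sum>t\<in>U. \<chi> t * \<psi> (a * ((1 + t) * m)))"
  proof (rule sum.cong[OF refl])
    fix a assume a: "a \<in> U"
    have "(\<Sum>b\<in>U. (\<chi> a * \<psi> (a * m)) * (\<chi> b * \<psi> (b * m)))
        = (\<Sum>t\<in>U. (\<chi> a * \<psi> (a * m)) * (\<chi> (a * t) * \<psi> ((a * t) * m)))"
      by (rule sum.reindex_bij_betw[OF bij_mult_units[OF a], symmetric])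
    also have "\<dots> = (\<Sum>t\<in>U. \<chi> t * \<psi> (a * ((1 + t) * m)))"
    proof (rule sum.cong[OF refl])
      fix t assume t: "t \<in> U"
      have "\<chi> a * \<chi> (a * t) = \<chi> a ^ 2 * \<chi> t"
        using mc_mult[OF mx a t] by (simp add: power2_eq_square)
      then have c: "\<chi> a * \<chi> (a * t) = \<chi> t" using sq a by simp
      have "\<psi> (a * m) * \<psi> ((a * t) * m) = \<psi> (a * m + (a * t) * m)" by (simp add: psi_add)
      also have "a * m + (a * t) * m = a * ((1 + t) * m)" by (simp add: algebra_simps)
      finally have p: "\<psi> (a * m) * \<psi> ((a * t) * m) = \<psi> (a * ((1 + t) * m))" .
      have "(\<chi> a * \<psi> (a * m)) * (\<chi> (a * t) * \<psi> ((a * t) * m))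
          = (\<chi> a * \<chi> (a * t)) * (\<psi> (a * m) * \<psi> ((a * t) * m))" by (simp only: ac_simps)
      then show "(\<chi> a * \<psi> (a * m)) * (\<chi> (a * t) * \<psi> ((a * t) * m)) = \<chi> t * \<psi> (a * ((1 + t) * m))"
        unfolding c p .
    qed
    finally show "(\<Sum>b\<in>U. (\<chi> a * \<psi> (a * m)) * (\<chi> b * \<psi> (b * m))) = (\<Sum>t\<in>U. \<chi> t * \<psi> (a * ((1 + t) * m)))" .
  qed
  also have "\<dots> = (\<Sum>t\<in>U. \<Sum>a\<in>U. \<chi> t * \<psi> (a * ((1 + t) * m)))" by (rule sum.swap)
  also have "\<dots> = (\<Sum>t\<in>U. \<chi> t * W t)" unfolding W_def by (simp only: sum_distrib_left)
  also have "\<dots> = (\<Sum>t\<in>U. (if 1 + t \<in> M then \<chi> t * (of_nat (card U) + of_nat (card M)) else 0)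
                     + \<chi> t * (- of_nat (card M)))"
  proof (rule sum.cong[OF refl])
    fix t assume t: "t \<in> U"
    show "\<chi> t * W t = (if 1 + t \<in> M then \<chi> t * (of_nat (card U) + of_nat (card M)) else 0)
                     + \<chi> t * (- of_nat (card M))"
    proof (cases "1 + t \<in> M")
      case True
      then have "(1 + t) * m = 0" using M_mult_A m(1) by blast
      then have "W t = of_nat (card U)" by (simp add: W_def psi_0)
      then show ?thesis using True by (simp add: algebra_simps)
    next
      case False
      then have u: "1 + t \<in> U" using inM_iff by blast
      have sA: "(1 + t) * m \<in> A" using ideal_mult[OF A_ideal m(1)] .
      have "(1 + t) * m \<noteq> 0" using unit_zero[OF u] m(2) by blast
      then have "W t = - of_nat (card M)" unfolding W_def using sum_U_psi_A sA by blast
      then show ?thesis using False by simp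
    qed
  qed
  also have "\<dots> = (\<Sum>t\<in>U. if 1 + t \<in> M then \<chi> t * (of_nat (card U) + of_nat (card M)) else 0)
                  + (- of_nat (card M)) * (\<Sum>t\<in>U. \<chi> t)"
    by (simp add: sum.distrib sum_subtractf sum_distrib_right mult.commute)
  also have "(\<Sum>t\<in>U. \<chi> t) = 0" by (rule char_sum_zero[OF nt])
  also have "(\<Sum>t\<in>U. if 1 + t \<in> M then \<chi> t * (of_nat (card U) + of_nat (card M)) else 0)
      = (\<Sum>t\<in>{t\<in>U. 1 + t \<in> M}. \<chi> t) * (of_nat (card U) + of_nat (card M))"
    by (subst sum_distrib_right, rule sum.inter_filter[symmetric]) simp
  also have "(\<Sum>t\<in>{t\<in>U. 1 + t \<in> M}. \<chi> t) = (\<Sum>j\<in>M. \<chi> (- 1 + j))"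
  proof -
    have bij: "bij_betw (\<lambda>j. - 1 + j) M {t\<in>U. 1 + t \<in> M}"
    proof (rule bij_betw_byWitness[where f'="\<lambda>t. 1 + t"])
      show "(\<lambda>j. - 1 + j) ` M \<subseteq> {t\<in>U. 1 + t \<in> M}"
        using unit_plus_M[OF minus_one_unit] by auto
      show "(\<lambda>t. 1 + t) ` {t\<in>U. 1 + t \<in> M} \<subseteq> M" by auto
    qed simp_all
    show ?thesis using sum.reindex_bij_betw[OF bij, of \<chi>] by simp
  qed
  also have "\<dots> = (\<Sum>j\<in>M. \<chi> (- 1))"
  proof (rule sum.cong[OF refl])
    fix j assume j: "j \<in> M"
    have nj: "- j \<in> M" using ideal_uminus[OF M_ideal j] .
    have e: "- 1 + j = (- 1) * (1 + - j)" by simp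
    have "\<chi> (- 1 + j) = \<chi> (- 1) * \<chi> (1 + - j)"
      unfolding e by (rule mc_mult[OF mx minus_one_unit one_plus_M[OF nj]])
    moreover have "\<chi> (1 + - j) = 1" using triv nj by blast
    ultimately show "\<chi> (- 1 + j) = \<chi> (- 1)" by simp
  qed
  also have "of_nat (card U) + of_nat (card M) = (of_nat (card (UNIV::'a set)) :: complex)"
    using card_U by (metis of_nat_add)
  finally show ?thesis by simp
qed

lemma case_sigma:
  assumes nt: "\<not> trivial_char \<chi>" and sg: "\<forall>u\<in>U. \<chi> u = quad_char u"
  shows "\<chi> (- 1) * T = of_nat (card U * card (UNIV::'a set))"
proof -
  have sq: "\<forall>u\<in>U. \<chi> u ^ 2 = 1" using sg by (simp add: quad_char_def)
  have triv: "\<forall>j\<in>M. \<chi> (1 + j) = 1"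
  proof
    fix j assume j: "j \<in> M"
    have "(1 + j) - 1 * 1 \<in> M" using j by simp
    then have "\<exists>v. (1 + j) - v * v \<in> M" by blast
    then have "quad_char (1 + j) = 1" unfolding quad_char_def by simp
    then show "\<chi> (1 + j) = 1" using sg one_plus_M[OF j] by simp
  qed
  have c1: "\<chi> (- 1) ^ 2 = 1" using sq minus_one_unit by blast
  have G0: "G 0 = 0" unfolding G_def using char_sum_zero[OF nt] by (simp add: psi_0)
  have "T = (\<Sum>m\<in>A. G m ^ 2)" by (rule T_on_A[OF triv])
  also have "\<dots> = G 0 ^ 2 + (\<Sum>m\<in>A - {0}. G m ^ 2)" by (rule A_split)
  also have "(\<Sum>m\<in>A - {0}. G m ^ 2) = (\<Sum>m\<in>A - {0}. \<chi> (- 1) * of_nat (card M) * of_nat (card (UNIV::'a set)))"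
    by (rule sum.cong[OF refl]) (use gauss_sq[OF sq triv nt] in blast)
  finally have "T = of_nat (card (A - {0})) * (\<chi> (- 1) * of_nat (card M) * of_nat (card (UNIV::'a set)))"
    using G0 by simp
  then have Te: "\<chi> (- 1) * T = of_nat (card (A - {0}) * card M * card (UNIV::'a set))"
    using c1 by (simp add: power2_eq_square ac_simps)
  obtain a' where a': "card A = Suc a'"
    using ideal_zero[OF A_ideal] by (metis card_gt_0_iff empty_iff finite gr0_conv_Suc)
  have cA0: "card (A - {0}) = a'" using a' ideal_zero[OF A_ideal] by simp
  have e1: "Suc a' * card M = card U + card M" using card_A card_U a' by simp
  then have e2: "a' * card M = card U" by simp
  show ?thesis using Te cA0 e2 by simp
qed

end


context lr2 begin

lemma c_trick:
  assumes c: "c \<in> U" and nc: "\<chi> c ^ 2 \<noteq> 1"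
    and sc: "\<forall>m\<in>M. f (c * m) = \<chi> (unit_inv c) ^ 2 * f m"
  shows "(\<Sum>m\<in>M. f m) = 0"
proof -
  have ic: "unit_inv c \<in> U" by (rule unit_inv_unit[OF c])
  have bij: "bij_betw (\<lambda>m. c * m) M M"
  proof (rule bij_betw_byWitness[where f'="\<lambda>m. unit_inv c * m"])
    show "\<forall>a\<in>M. unit_inv c * (c * a) = a"
    proof
      fix a :: 'a
      have "unit_inv c * (c * a) = (c * unit_inv c) * a" by (simp only: ac_simps)
      then show "unit_inv c * (c * a) = a" using unit_inv_prop[OF c] by simp
    qed
    show "\<forall>a\<in>M. c * (unit_inv c * a) = a"
    proof
      fix a :: 'a
      have "c * (unit_inv c * a) = (c * unit_inv c) * a" by (simp only: ac_simps)
      then show "c * (unit_inv c * a) = a" using unit_inv_prop[OF c] by simp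
    qed
    show "(\<lambda>m. c * m) ` M \<subseteq> M" using ideal_mult[OF M_ideal] by blast
    show "(\<lambda>m. unit_inv c * m) ` M \<subseteq> M" using ideal_mult[OF M_ideal] by blast
  qed
  have "(\<Sum>m\<in>M. f m) = (\<Sum>m\<in>M. f (c * m))"
    by (rule sum.reindex_bij_betw[OF bij, symmetric])
  also have "\<dots> = (\<Sum>m\<in>M. \<chi> (unit_inv c) ^ 2 * f m)" by (rule sum.cong[OF refl]) (use sc in blast)
  also have "\<dots> = \<chi> (unit_inv c) ^ 2 * (\<Sum>m\<in>M. f m)" by (simp only: sum_distrib_left)
  finally have e: "(1 - \<chi> (unit_inv c) ^ 2) * (\<Sum>m\<in>M. f m) = 0" by (simp add: algebra_simps)
  have "\<chi> (unit_inv c) ^ 2 \<noteq> 1"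
  proof
    assume h: "\<chi> (unit_inv c) ^ 2 = 1"
    have "(\<chi> (unit_inv c) * \<chi> c) ^ 2 = 1" using mc_inv[OF mx c] by simp
    then have "\<chi> (unit_inv c) ^ 2 * \<chi> c ^ 2 = 1" by (simp add: power_mult_distrib)
    then show False using h nc by simp
  qed
  with e show ?thesis by simp
qed

lemma f_scale:
  assumes c: "c \<in> U"
    and P: "\<forall>m\<in>M. G m \<noteq> 0 \<longrightarrow> \<tau> (1 + c * m) * \<chi> (1 + c * m) = \<tau> (1 + m) * \<chi> (1 + m)"
  shows "\<forall>m\<in>M. \<tau> (1 + c * m) * \<chi> (1 + c * m) * G (c * m) ^ 2
                 = \<chi> (unit_inv c) ^ 2 * (\<tau> (1 + m) * \<chi> (1 + m) * G m ^ 2)"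
proof
  fix m assume m: "m \<in> M"
  show "\<tau> (1 + c * m) * \<chi> (1 + c * m) * G (c * m) ^ 2
                 = \<chi> (unit_inv c) ^ 2 * (\<tau> (1 + m) * \<chi> (1 + m) * G m ^ 2)"
  proof (cases "G m = 0")
    case True
    then show ?thesis using G_scale[OF c, of m] by simp
  next
    case False
    then have "\<tau> (1 + c * m) * \<chi> (1 + c * m) = \<tau> (1 + m) * \<chi> (1 + m)" using P m by blast
    then show ?thesis using G_scale[OF c, of m] by (simp add: power_mult_distrib ac_simps)
  qed
qed

definition Q :: "'a set" where "Q = {u\<in>U. \<exists>v. u - v * v \<in> M}"

lemma card_filter: "finite S \<Longrightarrow> card {x\<in>S. P x} = (\<Sum>x\<in>S. if P x then 1 else 0::nat)"
  using sum.inter_filter[of S "\<lambda>_. 1::nat" P] by simp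

lemma card_Q: "card U \<le> 2 * card Q"
proof -
  define F where "F = (\<lambda>x. {v\<in>U. x - v * v \<in> M})"
  have "(\<Sum>x\<in>Q. card (F x)) = (\<Sum>x\<in>Q. \<Sum>v\<in>U. if x - v * v \<in> M then 1 else 0::nat)"
    unfolding F_def by (rule sum.cong[OF refl]) (rule card_filter, simp)
  also have "\<dots> = (\<Sum>v\<in>U. \<Sum>x\<in>Q. if x - v * v \<in> M then 1 else 0::nat)" by (rule sum.swap)
  also have "\<dots> = (\<Sum>v\<in>U. card {x\<in>Q. x - v * v \<in> M})"
    by (rule sum.cong[OF refl]) (rule card_filter[symmetric], simp)
  also have "\<dots> = (\<Sum>v\<in>U. card M)"
  proof (rule sum.cong[OF refl])
    fix v assume v: "v \<in> U"
    have vv: "v * v \<in> U" using units_mult[OF v v] .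
    have "{x\<in>Q. x - v * v \<in> M} = (\<lambda>m. v * v + m) ` M"
    proof (rule set_eqI, rule iffI)
      fix x assume "x \<in> {x\<in>Q. x - v * v \<in> M}"
      then have xm: "x - v * v \<in> M" by blast
      show "x \<in> (\<lambda>m. v * v + m) ` M" by (rule image_eqI[where x="x - v * v"]) (simp_all add: xm)
    next
      fix x assume "x \<in> (\<lambda>m. v * v + m) ` M"
      then obtain m where m: "m \<in> M" "x = v * v + m" by blast
      have "x \<in> U" using unit_plus_M[OF vv m(1)] m(2) by simp
      moreover have "x - v * v \<in> M" using m by simp
      ultimately show "x \<in> {x\<in>Q. x - v * v \<in> M}" unfolding Q_def by blast
    qed
    moreover have "inj_on (\<lambda>m. v * v + m) M" by (rule inj_onI) simp
    ultimately show "card {x\<in>Q. x - v * v \<in> M} = card M" by (simp add: card_image)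
  qed
  also have "\<dots> = card U * card M" by simp
  finally have e: "(\<Sum>x\<in>Q. card (F x)) = card U * card M" .
  have bnd: "card (F x) \<le> 2 * card M" if x: "x \<in> Q" for x
  proof -
    obtain v0 where v0: "v0 \<in> U" "x - v0 * v0 \<in> M"
    proof -
      from x obtain v0 where xu: "x \<in> U" and h: "x - v0 * v0 \<in> M" unfolding Q_def by blast
      have "v0 \<in> U"
      proof (rule ccontr)
        assume "v0 \<notin> U"
        then have "v0 \<in> M" using inM_iff by blast
        then have "v0 * v0 \<in> M" using ideal_mult[OF M_ideal] by blast
        then have "(x - v0 * v0) + v0 * v0 \<in> M" using ideal_add[OF M_ideal h] by blast
        then show False using xu inM_iff by simp
      qed
      then show ?thesis using that h by blast
    qed
    have "F x \<subseteq> (\<lambda>m. v0 + m) ` M \<union> (\<lambda>m. - v0 + m) ` M"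
    proof
      fix v assume "v \<in> F x"
      then have h: "x - v * v \<in> M" unfolding F_def by blast
      have "(x - v0 * v0) - (x - v * v) \<in> M" using ideal_diff[OF M_ideal v0(2) h] .
      moreover have "(x - v0 * v0) - (x - v * v) = (v - v0) * (v + v0)" by (simp add: algebra_simps)
      ultimately have "(v - v0) * (v + v0) \<in> M" by simp
      then have "v - v0 \<in> M \<or> v + v0 \<in> M" by (rule M_prime)
      then show "v \<in> (\<lambda>m. v0 + m) ` M \<union> (\<lambda>m. - v0 + m) ` M"
      proof
        assume "v - v0 \<in> M"
        then have "v \<in> (\<lambda>m. v0 + m) ` M" by (intro image_eqI[where x="v - v0"]) simp_all
        then show ?thesis by blast
      next
        assume "v + v0 \<in> M"
        then have "v \<in> (\<lambda>m. - v0 + m) ` M" by (intro image_eqI[where x="v + v0"]) simp_all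
        then show ?thesis by blast
      qed
    qed
    then have "card (F x) \<le> card ((\<lambda>m. v0 + m) ` M \<union> (\<lambda>m. - v0 + m) ` M)"
      by (rule card_mono[rotated]) simp
    also have "\<dots> \<le> card ((\<lambda>m. v0 + m) ` M) + card ((\<lambda>m. - v0 + m) ` M)" by (rule card_Un_le)
    also have "\<dots> \<le> card M + card M" by (intro add_mono card_image_le) simp_all
    finally show ?thesis by simp
  qed
  have "(\<Sum>x\<in>Q. card (F x)) \<le> card Q * (2 * card M)"
    using sum_bounded_above[of Q "\<lambda>x. card (F x)" "2 * card M"] bnd by simp
  then have "card U * card M \<le> (2 * card Q) * card M" using e by (simp add: ac_simps)
  moreover obtain x where "x \<in> M" "x \<noteq> 0" using M_nonzero by blast
  then have "card M > 0" by (auto simp: card_gt_0_iff)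
  ultimately show ?thesis by simp
qed

lemma sigma_char:
  assumes sq: "\<forall>u\<in>U. \<chi> u ^ 2 = 1" and triv: "\<forall>j\<in>M. \<chi> (1 + j) = 1"
    and nt: "\<not> trivial_char \<chi>"
  shows "\<forall>u\<in>U. \<chi> u = quad_char u"
proof -
  have QU: "Q \<subseteq> U" by (auto simp: Q_def)
  have chiQ: "\<chi> q = 1" if q: "q \<in> Q" for q
  proof -
    from q obtain v where qu: "q \<in> U" and h: "q - v * v \<in> M" unfolding Q_def by blast
    have v: "v \<in> U"
    proof (rule ccontr)
      assume "v \<notin> U"
      then have "v \<in> M" using inM_iff by blast
      then have "v * v \<in> M" using ideal_mult[OF M_ideal] by blast
      then have "(q - v * v) + v * v \<in> M" using ideal_add[OF M_ideal h] by blast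
      then show False using qu inM_iff by simp
    qed
    have vv: "v * v \<in> U" using units_mult[OF v v] .
    define w where "w = unit_inv (v * v) * (q - v * v)"
    have wM: "w \<in> M" unfolding w_def using ideal_mult[OF M_ideal h] .
    have "v * v * (1 + w) = v * v + (v * v * unit_inv (v * v)) * (q - v * v)"
      unfolding w_def by (simp only: distrib_left mult_1_right mult.assoc)
    then have e: "q = v * v * (1 + w)" using unit_inv_prop[OF vv] by simp
    have "\<chi> q = \<chi> v * \<chi> v * \<chi> (1 + w)"
      unfolding e using mc_mult[OF mx vv one_plus_M[OF wM]] mc_mult[OF mx v v] by simp
    also have "\<dots> = 1" using triv wM sq v by (simp add: power2_eq_square)
    finally show ?thesis .
  qed
  obtain x0 where x0: "x0 \<in> U" "\<chi> x0 \<noteq> 1" using nt by (auto simp: trivial_char_def)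
  have cx0: "\<chi> x0 = - 1" using sq x0 by (metis power2_eq_1_iff)
  have img: "(\<lambda>q. x0 * q) ` Q \<subseteq> U - Q"
  proof
    fix y assume "y \<in> (\<lambda>q. x0 * q) ` Q"
    then obtain q where q: "q \<in> Q" "y = x0 * q" by blast
    have qu: "q \<in> U" using q QU by blast
    have yu: "y \<in> U" using units_mult[OF x0(1) qu] q by simp
    have "\<chi> y = - 1" using q(2) mc_mult[OF mx x0(1) qu] cx0 chiQ[OF q(1)] by simp
    then have "y \<notin> Q" using chiQ by fastforce
    then show "y \<in> U - Q" using yu by blast
  qed
  have inj: "inj_on (\<lambda>q. x0 * q) Q"
    by (rule inj_onI) (use unit_cancel[OF x0(1)] in blast)
  have cimg: "card ((\<lambda>q. x0 * q) ` Q) = card Q" using card_image[OF inj] .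
  have cUQ: "card U = card Q + card (U - Q)"
    using card_Diff_subset[of Q U] QU card_mono[OF _ QU] by simp
  have "card Q \<le> card (U - Q)" using card_mono[OF _ img] cimg by simp
  then have "card (U - Q) \<le> card ((\<lambda>q. x0 * q) ` Q)" using card_Q cUQ cimg by simp
  then have imgeq: "(\<lambda>q. x0 * q) ` Q = U - Q" using card_seteq[OF _ img] by simp
  show ?thesis
  proof
    fix u assume u: "u \<in> U"
    show "\<chi> u = quad_char u"
    proof (cases "u \<in> Q")
      case True
      then have "\<exists>v. u - v * v \<in> M" by (simp add: Q_def)
      then show ?thesis using chiQ[OF True] by (simp add: quad_char_def)
    next
      case False
      then have nq: "\<not> (\<exists>v. u - v * v \<in> M)" using u by (simp add: Q_def)
      have "u \<in> (\<lambda>q. x0 * q) ` Q" using imgeq u False by blast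
      then obtain q where q: "q \<in> Q" "u = x0 * q" by blast
      have qu: "q \<in> U" using q QU by blast
      have "\<chi> u = - 1" using q(2) mc_mult[OF mx x0(1) qu] cx0 chiQ[OF q(1)] by simp
      then show ?thesis using nq by (simp add: quad_char_def)
    qed
  qed
qed

end


context lr2 begin

lemma ideal_J:
  assumes I: "ring_ideal I"
  shows "ring_ideal {h\<in>M. \<forall>n\<in>M. n * h \<in> I}"
  unfolding ring_ideal_def
proof (intro conjI ballI allI impI)
  show "0 \<in> {h\<in>M. \<forall>n\<in>M. n * h \<in> I}" using ideal_zero[OF M_ideal] ideal_zero[OF I] by simp
  fix x y assume x: "x \<in> {h\<in>M. \<forall>n\<in>M. n * h \<in> I}" and y: "y \<in> {h\<in>M. \<forall>n\<in>M. n * h \<in> I}"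
  have "x + y \<in> M" using x y ideal_add[OF M_ideal] by blast
  moreover have "n * (x + y) \<in> I" if n: "n \<in> M" for n
    using ideal_add[OF I, of "n * x" "n * y"] x y n by (simp add: distrib_left)
  ultimately show "x + y \<in> {h\<in>M. \<forall>n\<in>M. n * h \<in> I}" by blast
next
  fix r x assume x: "x \<in> {h\<in>M. \<forall>n\<in>M. n * h \<in> I}"
  have "r * x \<in> M" using x ideal_mult[OF M_ideal] by blast
  moreover have "n * (r * x) \<in> I" if n: "n \<in> M" for n
  proof -
    have eq: "n * (r * x) = r * (n * x)" by (rule mult.left_commute)
    have "n * x \<in> I" using x n by blast
    then show ?thesis unfolding eq by (rule ideal_mult[OF I])
  qed
  ultimately show "r * x \<in> {h\<in>M. \<forall>n\<in>M. n * h \<in> I}" by blast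
qed

lemma subcase_ii:
  assumes two: "(2::'a) \<notin> M" and ntM: "\<not> (\<forall>j\<in>M. \<chi> (1 + j) = 1)"
  shows "\<exists>c\<in>U. \<chi> c ^ 2 \<noteq> 1 \<and>
     (\<forall>m\<in>M. G m \<noteq> 0 \<longrightarrow> \<tau> (1 + c * m) * \<chi> (1 + c * m) = \<tau> (1 + m) * \<chi> (1 + m))"
proof -
  define I where "I = I0 \<chi>"
  have Iid: "ring_ideal I" unfolding I_def by (rule I0_ideal[OF mx])
  have IM: "I \<subseteq> M" unfolding I_def by (rule I0_sub_M)
  have Itr: "\<forall>j\<in>I. \<chi> (1 + j) = 1" unfolding I_def using I0_triv by blast
  have "\<not> M \<subseteq> I" using ntM Itr by blast
  then obtain x where x: "x \<in> M" "x \<notin> I" "\<forall>n\<in>M. n * x \<in> I"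
    using exists_socle_elem[OF Iid M_ideal] by blast
  define J where "J = {h\<in>M. \<forall>n\<in>M. n * h \<in> I}"
  have Jid: "ring_ideal J" unfolding J_def by (rule ideal_J[OF Iid])
  have JM: "J \<subseteq> M" unfolding J_def by blast
  have xJ: "x \<in> J" unfolding J_def using x by blast
  have "\<not> (\<forall>j\<in>J. \<chi> (1 + j) = 1)"
  proof
    assume "\<forall>j\<in>J. \<chi> (1 + j) = 1"
    then have "J \<subseteq> I" unfolding I_def by (rule I0_max[OF Jid JM])
    then show False using xJ x(2) by blast
  qed
  then obtain j1 where j1: "j1 \<in> J" "\<chi> (1 + j1) \<noteq> 1" by blast
  have "\<exists>h\<in>J. \<chi> (1 + h) ^ 2 \<noteq> 1"
  proof (rule ccontr)
    assume "\<not> ?thesis"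
    then have sqJ: "\<forall>h\<in>J. \<chi> (1 + h) ^ 2 = 1" by blast
    define s where "s = (\<lambda>h::'a. 2 * h + h * h)"
    have sJ: "s ` J \<subseteq> J"
    proof
      fix y assume "y \<in> s ` J"
      then obtain h where h: "h \<in> J" "y = 2 * h + h * h" unfolding s_def by blast
      show "y \<in> J" unfolding h(2) using h(1) ideal_add[OF Jid] ideal_mult[OF Jid] by blast
    qed
    have sinj: "inj_on s J"
    proof (rule inj_onI)
      fix h h' assume h: "h \<in> J" and h': "h' \<in> J" and e: "s h = s h'"
      have "(2 + h + h') * (h - h') = s h - s h'" unfolding s_def by (simp add: algebra_simps)
      then have z: "(2 + h + h') * (h - h') = 0" using e by simp
      have "2 + h + h' \<in> U"
      proof (rule ccontr)
        assume "2 + h + h' \<notin> U"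
        then have "2 + h + h' \<in> M" using inM_iff by blast
        moreover have "h + h' \<in> M" using h h' JM ideal_add[OF M_ideal] by blast
        ultimately have "(2 + h + h') - (h + h') \<in> M" using ideal_diff[OF M_ideal] by blast
        then show False using two by (simp add: algebra_simps)
      qed
      then have "h - h' = 0" using unit_zero z by blast
      then show "h = h'" by simp
    qed
    have "s ` J = J" using endo_inj_surj[OF _ sJ sinj] by simp
    then obtain h where h: "h \<in> J" "j1 = s h" using j1(1) by blast
    have e: "1 + j1 = (1 + h) * (1 + h)" unfolding h(2) s_def by (simp add: algebra_simps)
    have u: "1 + h \<in> U" using one_plus_M h(1) JM by blast
    have "\<chi> (1 + j1) = \<chi> (1 + h) ^ 2" unfolding e using mc_mult[OF mx u u] by (simp add: power2_eq_square)
    then show False using sqJ h(1) j1(2) by simp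
  qed
  then obtain h where h: "h \<in> J" "\<chi> (1 + h) ^ 2 \<noteq> 1" by blast
  have hM: "h \<in> M" using h(1) JM by blast
  have c: "1 + h \<in> U" using one_plus_M[OF hM] .
  have P: "\<forall>m\<in>M. G m \<noteq> 0 \<longrightarrow> \<tau> (1 + (1 + h) * m) * \<chi> (1 + (1 + h) * m) = \<tau> (1 + m) * \<chi> (1 + m)"
  proof (intro ballI impI)
    fix m assume m: "m \<in> M" and nz: "G m \<noteq> 0"
    have Im: "\<forall>i\<in>I. i * m = 0" by (rule support_J[OF Iid IM Itr nz])
    have hmA: "h * m \<in> A" unfolding A_def
    proof (intro CollectI ballI)
      fix n assume n: "n \<in> M"
      have "n * h \<in> I" using h(1) n unfolding J_def by blast
      then have "(n * h) * m = 0" using Im by blast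
      then show "n * (h * m) = 0" by (simp add: mult.assoc)
    qed
    have u: "1 + m \<in> U" using one_plus_M[OF m] .
    define a' where "a' = unit_inv (1 + m) * (h * m)"
    have a'A: "a' \<in> A" unfolding a'_def using ideal_mult[OF A_ideal hmA] .
    have a'U: "1 + a' \<in> U" using one_plus_M a'A A_sub_M by blast
    have "(1 + m) * (1 + a') = (1 + m) + ((1 + m) * unit_inv (1 + m)) * (h * m)"
      unfolding a'_def by (simp only: distrib_left mult_1_right mult.assoc)
    then have e0: "(1 + m) * (1 + a') = (1 + m) + h * m" unfolding unit_inv_prop[OF u] by simp
    have e: "1 + (1 + h) * m = (1 + m) * (1 + a')" unfolding e0 by (simp add: algebra_simps)
    have "\<tau> (1 + (1 + h) * m) = \<tau> (1 + m)"
      unfolding e using mc_mult[OF mt u a'U] nonprim_A[OF mt npt a'A] by simp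
    moreover have "\<chi> (1 + (1 + h) * m) = \<chi> (1 + m)"
      unfolding e using mc_mult[OF mx u a'U] nonprim_A[OF mx npx a'A] by simp
    ultimately show "\<tau> (1 + (1 + h) * m) * \<chi> (1 + (1 + h) * m) = \<tau> (1 + m) * \<chi> (1 + m)" by simp
  qed
  show ?thesis using c h(2) P by blast
qed

lemma case_other:
  assumes two: "(2::'a) \<notin> M" and nt: "\<not> trivial_char \<chi>" and ns: "\<not> (\<forall>u\<in>U. \<chi> u = quad_char u)"
  shows "T = 0"
proof -
  obtain c where c: "c \<in> U" "\<chi> c ^ 2 \<noteq> 1"
    and P: "\<forall>m\<in>M. G m \<noteq> 0 \<longrightarrow> \<tau> (1 + c * m) * \<chi> (1 + c * m) = \<tau> (1 + m) * \<chi> (1 + m)"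
  proof (cases "\<forall>j\<in>M. \<chi> (1 + j) = 1")
    case True
    then have "\<not> (\<forall>u\<in>U. \<chi> u ^ 2 = 1)" using sigma_char[OF _ True nt] ns by blast
    then obtain c where c: "c \<in> U" "\<chi> c ^ 2 \<noteq> 1" by blast
    have "\<forall>m\<in>M. G m \<noteq> 0 \<longrightarrow> \<tau> (1 + c * m) * \<chi> (1 + c * m) = \<tau> (1 + m) * \<chi> (1 + m)"
    proof (intro ballI impI)
      fix m assume m: "m \<in> M" and nz: "G m \<noteq> 0"
      have mA: "m \<in> A" by (rule support_A[OF True nz])
      have cmA: "c * m \<in> A" using ideal_mult[OF A_ideal mA] .
      have "\<tau> (1 + c * m) = 1" "\<tau> (1 + m) = 1" using nonprim_A[OF mt npt] mA cmA by blast+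
      moreover have "\<chi> (1 + c * m) = 1" "\<chi> (1 + m) = 1" using nonprim_A[OF mx npx] mA cmA by blast+
      ultimately show "\<tau> (1 + c * m) * \<chi> (1 + c * m) = \<tau> (1 + m) * \<chi> (1 + m)" by simp
    qed
    then show ?thesis using that c by blast
  next
    case False
    then show ?thesis using subcase_ii[OF two False] that by blast
  qed
  show ?thesis unfolding T_def by (rule c_trick[OF c f_scale[OF c(1) P]])
qed

lemma main:
  assumes two: "(2::'a) \<notin> M"
  shows "(\<Sum>a\<in>U. \<chi> a * complex_of_real ((cmod (K a))\<^sup>2)) =
           (if trivial_char \<chi> \<or> (\<forall>u\<in>U. \<chi> u = quad_char u)
            then of_nat (card U * card (UNIV::'a set)) else 0)"
proof -
  have "(\<Sum>a\<in>U. \<chi> a * complex_of_real ((cmod (K a))\<^sup>2)) = \<chi> (- 1) * T"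
    unfolding S_formula S_M T_def ..
  then show ?thesis
    using case_trivial case_sigma case_other[OF two] by auto
qed

end

lemma (in lr) two_notin:
  assumes odd: "odd (residue_char TYPE('a))"
  shows "(2::'a) \<notin> M"
proof
  assume two: "(2::'a) \<in> M"
  have "(LEAST n. n > 0 \<and> (of_nat n :: 'a) \<in> max_ideal) = 2"
  proof (rule Least_equality)
    show "2 > (0::nat) \<and> (of_nat 2 :: 'a) \<in> max_ideal" using two by simp
    fix y :: nat assume y: "y > 0 \<and> (of_nat y :: 'a) \<in> max_ideal"
    show "2 \<le> y"
    proof (rule ccontr)
      assume "\<not> 2 \<le> y"
      then have "y = 1" using y by simp
      then show False using y one_notin_M by simp
    qed
  qed
  then have "residue_char TYPE('a) = 2" by (simp add: residue_char_def)
  then show False using odd by simp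
qed

theorem mainTheorem10:
  fixes \<psi> \<tau> \<chi> :: "'a::{comm_ring_1, finite} \<Rightarrow> complex"
  assumes "local_ring TYPE('a)"
    and "frobenius TYPE('a)"
    and "\<not> is_field_ring TYPE('a)"
    and "odd (residue_char TYPE('a))"
    and "primitive_add_char \<psi>"
    and "mult_char \<tau>" and "\<not> primitive_mult_char \<tau>"
    and "mult_char \<chi>" and "\<not> primitive_mult_char \<chi>"
  shows "(\<Sum>a\<in>units. \<chi> a * complex_of_real ((cmod (kloosterman \<psi> \<tau> a))\<^sup>2)) =
           (if trivial_char \<chi> \<or> (\<forall>u\<in>units. \<chi> u = quad_char u)
            then of_nat (card (units::'a set) * card (UNIV::'a set)) else 0)"
proof -
  interpret lr2 \<psi> \<tau> \<chi>
    by unfold_locales (use assms in auto)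
  have two: "(2::'a) \<notin> max_ideal" using two_notin assms(4) by blast
  show ?thesis using main[OF two] by simp
qed

end
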